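(* The maps $\partial_{l-k}:\mathcal M_{l-k}\to\mathcal M_{l-k-1}$ are homomorphisms of $\mathbb Z[W]$-modules and satisfy $\partial_{l-k-1}\circ\partial_{l-k}=0$; thus $(\mathcal M_*,\partial)$ is a chain complex of $\mathbb Z[W]$-modules.
   Context: Let $\mathfrak g$ be a real split semisimple Lie algebra of rank $l$ with simple roots $\Pi=\{\alpha_1,\dots,\alpha_l\}$, Cartan matrix $C_{i,j}=\alpha_i(h_{\alpha_j})$ ($h_{\alpha_j}$ coroots), Weyl group $W$. For $S\subset\Pi$ let $W_S$ be generated by $s_\alpha$, $\alpha\in S$, and $\mathbb D(S)$ the set of functions $\eta:S\to\{\pm1\}$. For $\alpha_i\in S$ let $(s_{\alpha_i}\eta)(\alpha_j)=\eta(\alpha_j)\eta(\alpha_i)^{-C_{j,i}}$ ($\alpha_j\in S$) and $r_i=|\{\alpha_j\in\Pi\setminus S:C_{j,i}\text{ odd}\}|$; the free abelian group $\mathbb Z[\mathbb D(S)]$ is a $\mathbb Z[W_S]$-module with $s_{\alpha_i}\cdot\eta=\eta(\alpha_i)^{r_i}(s_{\alpha_i}\eta)$. Put $\mathcal M(S)=\mathbb Z[W]\otimes_{\mathbb Z[W_S]}\mathbb Z[\mathbb D(S)]$, with $\mathbb Z$-basis $w^\bullet\otimes\eta$ ($w^\bullet$ minimal-length representatives of $W/W_S$, $\eta\in\mathbb D(S)$), and $\mathcal M_{l-k}=\bigoplus_{|S|=k}\mathcal M(S)$. For $\eta\in\mathbb D(S)$ with $\Pi\setminus S=\{\alpha_{i_1},\dots,\alpha_{i_m}\}$,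 $i_1<\dots<i_m$, and $c\in\{1,2\}$, $\partial_{j,c}\eta\in\mathbb D(S\cup\{\alpha_{i_j}\})$ extends $\eta$ by $\alpha_{i_j}\mapsto-1$ if $c=1$, $+1$ if $c=2$. Define $\partial_{l-k}(w^\bullet\otimes\eta)=\sum_{j=1}^{l-k}\sum_{c=1}^2(-1)^{j+c+1}w^\bullet\otimes\partial_{j,c}\eta$, the $(j,c)$ term in $\mathcal M(S\cup\{\alpha_{i_j}\})$, extended $\mathbb Z$-linearly. *)

theory Defs
  imports Complex_Main "Jordan_Normal_Form.Matrix" "HOL-Library.FuncSet"
begin

text \<open>Simple roots are indexed by 0,...,l-1 (alpha_(i+1) in the paper is index i).
  C i j = alpha_i(h_alpha_j).  The hypothesis that C is the Cartan matrix of a real split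
  semisimple Lie algebra is expressed by the classical (Serre) characterisation:
  C is a symmetrisable generalised Cartan matrix whose symmetrisation is positive definite.\<close>

definition cartan_finite_type :: "nat \<Rightarrow> (nat \<Rightarrow> nat \<Rightarrow> int) \<Rightarrow> bool" where
  "cartan_finite_type l C \<longleftrightarrow>
     (\<forall>i<l. C i i = 2) \<and> (\<forall>i<l. \<forall>j<l. i \<noteq> j \<longrightarrow> C i j \<le> 0) \<and>
     (\<forall>i<l. \<forall>j<l. C i j = 0 \<longleftrightarrow> C j i = 0) \<and>
     (\<exists>e::nat \<Rightarrow> real. (\<forall>i<l. e i > 0) \<and>
        (\<forall>i<l. \<forall>j<l. of_int (C i j) * e j = of_int (C j i) * e i) \<and>
        (\<forall>x::nat \<Rightarrow> real. (\<exists>i<l. x i \<noteq> 0) \<longrightarrow>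
            (\<Sum>i<l. \<Sum>j<l. x i * (of_int (C i j) * e j) * x j) > 0))"

text \<open>Simple reflection s_i acting on the root lattice Z^l (coordinates w.r.t. simple roots):
  s_i(alpha_j) = alpha_j - C j i * alpha_i; column j is the image of alpha_j.\<close>
definition srefl :: "nat \<Rightarrow> (nat \<Rightarrow> nat \<Rightarrow> int) \<Rightarrow> nat \<Rightarrow> int mat" where
  "srefl l C i = mat l l (\<lambda>(k, j). (if k = j then 1 else 0) - (if k = i then C j i else 0))"

definition word_prod :: "nat \<Rightarrow> (nat \<Rightarrow> nat \<Rightarrow> int) \<Rightarrow> nat list \<Rightarrow> int mat" where
  "word_prod l C ws = foldr (\<lambda>i m. srefl l C i * m) ws (1\<^sub>m l)"

text \<open>W_S: the subgroup generated by s_i, i in S (monoid closure = group closure, as s_i^2 = 1).\<close>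
definition weyl_sub :: "nat \<Rightarrow> (nat \<Rightarrow> nat \<Rightarrow> int) \<Rightarrow> nat set \<Rightarrow> int mat set" where
  "weyl_sub l C S = {word_prod l C ws | ws. set ws \<subseteq> S}"

abbreviation weyl :: "nat \<Rightarrow> (nat \<Rightarrow> nat \<Rightarrow> int) \<Rightarrow> int mat set" where
  "weyl l C \<equiv> weyl_sub l C {..<l}"

definition wlen :: "nat \<Rightarrow> (nat \<Rightarrow> nat \<Rightarrow> int) \<Rightarrow> int mat \<Rightarrow> nat" where
  "wlen l C w = (LEAST n. \<exists>ws. set ws \<subseteq> {..<l} \<and> length ws = n \<and> word_prod l C ws = w)"

definition min_rep :: "nat \<Rightarrow> (nat \<Rightarrow> nat \<Rightarrow> int) \<Rightarrow> nat set \<Rightarrow> int mat \<Rightarrow> bool" where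
  "min_rep l C S u \<longleftrightarrow> u \<in> weyl l C \<and> (\<forall>v \<in> weyl_sub l C S. wlen l C u \<le> wlen l C (u * v))"

definition coset_rep :: "nat \<Rightarrow> (nat \<Rightarrow> nat \<Rightarrow> int) \<Rightarrow> nat set \<Rightarrow> int mat \<Rightarrow> int mat" where
  "coset_rep l C S w = (THE u. min_rep l C S u \<and> (\<exists>v \<in> weyl_sub l C S. w = u * v))"

definition coset_part :: "nat \<Rightarrow> (nat \<Rightarrow> nat \<Rightarrow> int) \<Rightarrow> nat set \<Rightarrow> int mat \<Rightarrow> int mat" where
  "coset_part l C S w = (THE v. v \<in> weyl_sub l C S \<and> w = coset_rep l C S w * v)"

definition dset :: "nat set \<Rightarrow> (nat \<Rightarrow> int) set" where
  "dset S = S \<rightarrow>\<^sub>E {-1, 1}"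

text \<open>(s_i eta)(alpha_j) = eta(alpha_j) * eta(alpha_i)^(-C j i); since eta(alpha_i) = +-1,
  the power with exponent -C j i equals the power with exponent |C j i|.\<close>
definition sfun :: "(nat \<Rightarrow> nat \<Rightarrow> int) \<Rightarrow> nat set \<Rightarrow> nat \<Rightarrow> (nat \<Rightarrow> int) \<Rightarrow> (nat \<Rightarrow> int)" where
  "sfun C S i \<eta> = (\<lambda>j. if j \<in> S then \<eta> j * \<eta> i ^ nat \<bar>C j i\<bar> else undefined)"

definition rcount :: "nat \<Rightarrow> (nat \<Rightarrow> nat \<Rightarrow> int) \<Rightarrow> nat set \<Rightarrow> nat \<Rightarrow> nat" where
  "rcount l C S i = card {j \<in> {..<l} - S. odd (C j i)}"

text \<open>Action of a generator s_i (i in S) on signed basis elements (e, eta) = e * eta of Z[D(S)]: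
  s_i . eta = eta(alpha_i)^(r_i) (s_i eta).\<close>
definition sact :: "nat \<Rightarrow> (nat \<Rightarrow> nat \<Rightarrow> int) \<Rightarrow> nat set \<Rightarrow> nat \<Rightarrow> int \<times> (nat \<Rightarrow> int) \<Rightarrow> int \<times> (nat \<Rightarrow> int)" where
  "sact l C S i p = (case p of (e, \<eta>) \<Rightarrow> (e * \<eta> i ^ rcount l C S i, sfun C S i \<eta>))"

definition word_act :: "nat \<Rightarrow> (nat \<Rightarrow> nat \<Rightarrow> int) \<Rightarrow> nat set \<Rightarrow> nat list \<Rightarrow> (nat \<Rightarrow> int) \<Rightarrow> int \<times> (nat \<Rightarrow> int)" where
  "word_act l C S ws \<eta> = foldr (sact l C S) ws (1, \<eta>)"

definition wsact :: "nat \<Rightarrow> (nat \<Rightarrow> nat \<Rightarrow> int) \<Rightarrow> nat set \<Rightarrow> int mat \<Rightarrow> (nat \<Rightarrow> int) \<Rightarrow> int \<times> (nat \<Rightarrow> int)" where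
  "wsact l C S v \<eta> = word_act l C S (SOME ws. set ws \<subseteq> S \<and> word_prod l C ws = v) \<eta>"

text \<open>Chains: Z-valued functions on cells (S, w^bullet, eta); the basis element
  w^bullet (x) eta of M(S) is the indicator of the cell.\<close>
type_synonym cell = "nat set \<times> int mat \<times> (nat \<Rightarrow> int)"
type_synonym chain = "cell \<Rightarrow> int"

text \<open>The element w (x) eta of M(S) = Z[W] (x)_{Z[W_S]} Z[D(S)], for arbitrary w in W,
  written in the basis: w = u v, u minimal, v in W_S, so w (x) eta = u (x) (v . eta).\<close>
definition tens :: "nat \<Rightarrow> (nat \<Rightarrow> nat \<Rightarrow> int) \<Rightarrow> nat set \<Rightarrow> int mat \<Rightarrow> (nat \<Rightarrow> int) \<Rightarrow> chain" where
  "tens l C S w \<eta> = (case wsact l C S (coset_part l C S w) \<eta> of (e, \<eta>') \<Rightarrow>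
      (\<lambda>x. if x = (S, coset_rep l C S w, \<eta>') then e else 0))"

text \<open>Basis of M_{l-k} = direct sum over |S| = k of M(S).\<close>
definition basis :: "nat \<Rightarrow> (nat \<Rightarrow> nat \<Rightarrow> int) \<Rightarrow> nat \<Rightarrow> cell set" where
  "basis l C k = {(S, u, \<eta>). S \<subseteq> {..<l} \<and> card S = k \<and> min_rep l C S u \<and> \<eta> \<in> dset S}"

text \<open>Mod l C k is M_{l-k} (chains supported on cells with |S| = k).\<close>
definition Mod :: "nat \<Rightarrow> (nat \<Rightarrow> nat \<Rightarrow> int) \<Rightarrow> nat \<Rightarrow> chain set" where
  "Mod l C k = {f. \<forall>x. x \<notin> basis l C k \<longrightarrow> f x = 0}"

definition linext :: "(cell \<Rightarrow> chain) \<Rightarrow> chain \<Rightarrow> chain" where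
  "linext F f = (\<lambda>y. \<Sum>x \<in> {x. f x \<noteq> 0}. f x * F x y)"

definition wmult :: "nat \<Rightarrow> (nat \<Rightarrow> nat \<Rightarrow> int) \<Rightarrow> int mat \<Rightarrow> chain \<Rightarrow> chain" where
  "wmult l C g f = linext (\<lambda>(S, u, \<eta>). tens l C S (g * u) \<eta>) f"

text \<open>The complement of S is listed increasingly as cs;
  list index j corresponds to the paper's index j+1, so the sign (-1)^(j+c+1) becomes
  (-1)^((j+1)+c+1).  c = 1 extends by -1, c = 2 by +1.\<close>
definition bd_cell :: "nat \<Rightarrow> (nat \<Rightarrow> nat \<Rightarrow> int) \<Rightarrow> cell \<Rightarrow> chain" where
  "bd_cell l C x = (case x of (S, u, \<eta>) \<Rightarrow>
     (let cs = sorted_list_of_set ({..<l} - S) in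
      (\<lambda>y. \<Sum>j<length cs. \<Sum>c\<in>{1::nat, 2}.
          (-1) ^ ((j + 1) + c + 1) *
          tens l C (insert (cs ! j) S) u (\<eta>(cs ! j := (if c = 1 then -1 else 1))) y)))"

definition bd :: "nat \<Rightarrow> (nat \<Rightarrow> nat \<Rightarrow> int) \<Rightarrow> chain \<Rightarrow> chain" where
  "bd l C f = linext (bd_cell l C) f"

end

theory Submission
  imports Defs "Jordan_Normal_Form.Determinant" "HOL-Analysis.Function_Topology" "HOL-Analysis.Abstract_Limits"
begin


locale cartan =
  fixes l :: nat and C :: "nat \<Rightarrow> nat \<Rightarrow> int"
  assumes cft: "cartan_finite_type l C"
begin

lemma Cdiag: "i < l \<Longrightarrow> C i i = 2"
  using cft unfolding cartan_finite_type_def by blast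

lemma Coff: "i < l \<Longrightarrow> j < l \<Longrightarrow> i \<noteq> j \<Longrightarrow> C i j \<le> 0"
  using cft unfolding cartan_finite_type_def by blast

lemma Czero: "i < l \<Longrightarrow> j < l \<Longrightarrow> C i j = 0 \<longleftrightarrow> C j i = 0"
  using cft unfolding cartan_finite_type_def by blast

lemma srefl_carrier[simp]: "srefl l C i \<in> carrier_mat l l"
  unfolding srefl_def by simp

lemma srefl_dim[simp]: "dim_row (srefl l C i) = l" "dim_col (srefl l C i) = l"
  unfolding srefl_def by simp_all

lemma srefl_index: "k < l \<Longrightarrow> j < l \<Longrightarrow>
  srefl l C i $$ (k, j) = (if k = j then 1 else 0) - (if k = i then C j i else 0)"
  unfolding srefl_def by simp

lemma word_prod_Nil[simp]: "word_prod l C [] = 1\<^sub>m l"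
  unfolding word_prod_def by simp

lemma word_prod_Cons[simp]: "word_prod l C (i # ws) = srefl l C i * word_prod l C ws"
  unfolding word_prod_def by simp

lemma word_prod_carrier[simp]: "word_prod l C ws \<in> carrier_mat l l"
  by (induction ws) auto

lemma word_prod_dim[simp]: "dim_row (word_prod l C ws) = l" "dim_col (word_prod l C ws) = l"
  using carrier_matD[OF word_prod_carrier[of ws]] by auto

lemma word_prod_append: "word_prod l C (xs @ ys) = word_prod l C xs * word_prod l C ys"
proof (induction xs)
  case Nil
  then show ?case by simp
next
  case (Cons x xs)
  then show ?case
    by (simp add: assoc_mult_mat[of _ l l _ l _ l])
qed

lemma mult_index: "A \<in> carrier_mat l l \<Longrightarrow> B \<in> carrier_mat l l \<Longrightarrow> k < l \<Longrightarrow> j < l \<Longrightarrow>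
  (A * B) $$ (k, j) = (\<Sum>m<l. A $$ (k, m) * B $$ (m, j))"
  by (auto simp: scalar_prod_def lessThan_atLeast0 intro!: sum.cong)

lemma mult_srefl_index: assumes "M \<in> carrier_mat l l" "k < l" "j < l" "i < l"
  shows "(M * srefl l C i) $$ (k, j) = M $$ (k, j) - M $$ (k, i) * C j i"
proof -
  have "(M * srefl l C i) $$ (k, j) = (\<Sum>m<l. M $$ (k, m) * ((if m = j then 1 else 0) - (if m = i then C j i else 0)))"
    using assms by (simp del: index_mult_mat add: mult_index srefl_index)
  also have "\<dots> = (\<Sum>m<l. (if m = j then M $$ (k, m) else 0) - (if m = i then M $$ (k, m) * C j i else 0))"
    by (intro sum.cong) (auto simp: right_diff_distrib left_diff_distrib)
  also have "\<dots> = (\<Sum>m<l. (if m = j then M $$ (k, m) else 0)) - (\<Sum>m<l. (if m = i then M $$ (k, m) * C j i else 0))"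
    by (simp add: sum_subtractf)
  also have "\<dots> = M $$ (k, j) - M $$ (k, i) * C j i"
    using assms by simp
  finally show ?thesis .
qed

lemma srefl_mult_index: assumes "M \<in> carrier_mat l l" "k < l" "j < l" "i < l"
  shows "(srefl l C i * M) $$ (k, j) = M $$ (k, j) - (if k = i then (\<Sum>m<l. C m i * M $$ (m, j)) else 0)"
proof -
  have "(srefl l C i * M) $$ (k, j) = (\<Sum>m<l. ((if k = m then 1 else 0) - (if k = i then C m i else 0)) * M $$ (m, j))"
    using assms by (simp del: index_mult_mat add: mult_index srefl_index)
  also have "\<dots> = (\<Sum>m<l. (if k = m then M $$ (m, j) else 0) - (if k = i then C m i * M $$ (m, j) else 0))"
    by (intro sum.cong) (auto simp: right_diff_distrib left_diff_distrib)
  also have "\<dots> = (\<Sum>m<l. (if k = m then M $$ (m, j) else 0)) - (\<Sum>m<l. (if k = i then C m i * M $$ (m, j) else 0))"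
    by (simp add: sum_subtractf)
  also have "\<dots> = M $$ (k, j) - (if k = i then (\<Sum>m<l. C m i * M $$ (m, j)) else 0)"
    using assms by simp
  finally show ?thesis .
qed

lemma srefl_sq: assumes "i < l" shows "srefl l C i * srefl l C i = 1\<^sub>m l"
proof (rule eq_matI)
  fix k j assume kj: "k < dim_row (1\<^sub>m l)" "j < dim_col (1\<^sub>m l)"
  then show "(srefl l C i * srefl l C i) $$ (k, j) = 1\<^sub>m l $$ (k, j)"
    using assms by (simp del: index_mult_mat add: mult_srefl_index srefl_index Cdiag algebra_simps)
qed auto

lemma word_prod_rev: assumes "set ws \<subseteq> {..<l}"
  shows "word_prod l C ws * word_prod l C (rev ws) = 1\<^sub>m l"
  using assms
proof (induction ws)
  case Nil
  then show ?case by simp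
next
  case (Cons x xs)
  have "word_prod l C (x # xs) * word_prod l C (rev (x # xs))
      = srefl l C x * ((word_prod l C xs * word_prod l C (rev xs)) * srefl l C x)"
  proof -
    have e: "word_prod l C (rev (x # xs)) = word_prod l C (rev xs) * srefl l C x"
      by (simp add: word_prod_append)
    have a: "srefl l C x * word_prod l C xs * (word_prod l C (rev xs) * srefl l C x)
       = srefl l C x * (word_prod l C xs * (word_prod l C (rev xs) * srefl l C x))"
      by (rule assoc_mult_mat[of _ l l _ l _ l]) auto
    show ?thesis unfolding e word_prod_Cons a
      by (subst assoc_mult_mat[of _ l l _ l _ l]) auto
  qed
  also have "\<dots> = 1\<^sub>m l" using Cons by (simp add: srefl_sq)
  finally show ?case .
qed

lemma word_prod_rev': assumes "set ws \<subseteq> {..<l}"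
  shows "word_prod l C (rev ws) * word_prod l C ws = 1\<^sub>m l"
  using word_prod_rev[of "rev ws"] assms by simp

lemma det_srefl: assumes "i < l" shows "det (srefl l C i) = -1"
proof -
  define D where "D J = mat l l (\<lambda>(k, j). (if k = j then (if k = i then -1 else 1) else 0) - (if k = i \<and> j \<in> J then C j i else 0))" for J
  have Dc: "D J \<in> carrier_mat l l" for J unfolding D_def by simp
  have Di: "D J $$ (k, m) = (if k = m then (if k = i then -1 else 1) else 0) - (if k = i \<and> m \<in> J then C m i else 0)"
    if "k < l" "m < l" for J k m unfolding D_def using that by simp
  have "det (D J) = -1" if "finite J" "J \<subseteq> {..<l} - {i}" for J
    using that
  proof (induction J rule: finite_induct)
    case empty
    have "D {} = multrow_mat l i (-1)"
    proof (rule eq_matI)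
      fix k m assume "k < dim_row (multrow_mat l i (-1::int))" "m < dim_col (multrow_mat l i (-1::int))"
      then show "D {} $$ (k, m) = multrow_mat l i (-1) $$ (k, m)"
        by (simp add: Di multrow_mat_def)
    qed (simp_all add: D_def multrow_mat_def)
    then show ?case using assms by (simp add: det_multrow_mat)
  next
    case (insert j J)
    have jl: "j < l" "j \<noteq> i" "j \<notin> J" using insert by auto
    have "D (insert j J) = addrow (- C j i) i j (D J)"
    proof (rule eq_matI)
      fix k m assume "k < dim_row (addrow (- C j i) i j (D J))" "m < dim_col (addrow (- C j i) i j (D J))"
      then have km: "k < l" "m < l" using Dc[of J] by (auto simp: mat_addrow_def)
      show "D (insert j J) $$ (k, m) = addrow (- C j i) i j (D J) $$ (k, m)"
        using km jl by (auto simp add: mat_addrow_def Dc[THEN carrier_matD(1)] Dc[THEN carrier_matD(2)] Di)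
    qed (simp_all add: D_def mat_addrow_def)
    then have "det (D (insert j J)) = det (D J)"
      using det_addrow[of j l i "D J" "- C j i"] jl Dc by simp
    then show ?case using insert by simp
  qed
  moreover have "D ({..<l} - {i}) = srefl l C i"
  proof (rule eq_matI)
    fix k m assume "k < dim_row (srefl l C i)" "m < dim_col (srefl l C i)"
    then show "D ({..<l} - {i}) $$ (k, m) = srefl l C i $$ (k, m)"
      using assms by (simp add: Di srefl_index Cdiag)
  qed (simp_all add: D_def)
  ultimately show ?thesis by (metis finite_Diff finite_lessThan order_refl)
qed

lemma det_word_prod: "set ws \<subseteq> {..<l} \<Longrightarrow> det (word_prod l C ws) = (-1) ^ length ws"
proof (induction ws)
  case Nil
  then show ?case by simp
next
  case (Cons x xs)
  then show ?case by (simp add: det_mult[of _ l] det_srefl)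
qed

end


context cartan begin

definition lenS :: "nat set \<Rightarrow> int mat \<Rightarrow> nat" where
  "lenS S w = (LEAST n. \<exists>ws. set ws \<subseteq> S \<and> length ws = n \<and> word_prod l C ws = w)"

lemma wlen_lenS: "wlen l C w = lenS {..<l} w"
  unfolding wlen_def lenS_def ..

lemma weyl_subI: "set ws \<subseteq> S \<Longrightarrow> word_prod l C ws \<in> weyl_sub l C S"
  unfolding weyl_sub_def by blast

lemma weyl_subE: assumes "w \<in> weyl_sub l C S"
  obtains ws where "set ws \<subseteq> S" "word_prod l C ws = w"
  using assms unfolding weyl_sub_def by blast

lemma WS_carrier: "w \<in> weyl_sub l C S \<Longrightarrow> w \<in> carrier_mat l l"
  by (auto elim: weyl_subE)

lemma WS_dim: "w \<in> weyl_sub l C S \<Longrightarrow> dim_row w = l"  "w \<in> weyl_sub l C S \<Longrightarrow> dim_col w = l"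
  using WS_carrier carrier_matD by blast+

lemma WS_one: "1\<^sub>m l \<in> weyl_sub l C S"
  using weyl_subI[of "[]" S] by simp

lemma WS_srefl: "i \<in> S \<Longrightarrow> srefl l C i \<in> weyl_sub l C S"
  using weyl_subI[of "[i]" S] by simp

lemma WS_mult: "a \<in> weyl_sub l C S \<Longrightarrow> b \<in> weyl_sub l C S \<Longrightarrow> a * b \<in> weyl_sub l C S"
  by (metis weyl_subE weyl_subI word_prod_append set_append Un_least)

lemma WS_mono: "S \<subseteq> T \<Longrightarrow> weyl_sub l C S \<subseteq> weyl_sub l C T"
  unfolding weyl_sub_def by blast

lemma WS_inv: assumes "w \<in> weyl_sub l C S" "S \<subseteq> {..<l}"
  obtains w' where "w' \<in> weyl_sub l C S" "w * w' = 1\<^sub>m l" "w' * w = 1\<^sub>m l"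
proof -
  obtain ws where ws: "set ws \<subseteq> S" "word_prod l C ws = w" using assms weyl_subE by blast
  have "set ws \<subseteq> {..<l}" using ws assms by auto
  moreover have "word_prod l C (rev ws) \<in> weyl_sub l C S" using ws by (intro weyl_subI) auto
  ultimately show ?thesis
    using that[of "word_prod l C (rev ws)"] ws word_prod_rev[of ws] word_prod_rev'[of ws] by auto
qed

lemma left_cancel: fixes u u' x y :: "int mat" assumes "u' * u = 1\<^sub>m l" "u \<in> carrier_mat l l" "u' \<in> carrier_mat l l"
  "x \<in> carrier_mat l l" "y \<in> carrier_mat l l" "u * x = u * y"
  shows "x = y"
proof -
  have "x = (u' * u) * x" using assms left_mult_one_mat[OF assms(4)] by simp
  also have "\<dots> = u' * (u * x)" using assms by (metis assoc_mult_mat)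
  also have "\<dots> = u' * (u * y)" using assms by simp
  also have "\<dots> = (u' * u) * y" using assms by (metis assoc_mult_mat)
  finally show ?thesis using assms left_mult_one_mat[OF assms(5)] by simp
qed

lemma lenS_word: assumes "w \<in> weyl_sub l C S"
  obtains ws where "set ws \<subseteq> S" "length ws = lenS S w" "word_prod l C ws = w"
proof -
  have "\<exists>n ws. set ws \<subseteq> S \<and> length ws = n \<and> word_prod l C ws = w"
    using assms by (auto elim: weyl_subE)
  then have "\<exists>ws. set ws \<subseteq> S \<and> length ws = lenS S w \<and> word_prod l C ws = w"
    unfolding lenS_def by (rule LeastI_ex)
  then show ?thesis using that by blast
qed

lemma lenS_le: "set ws \<subseteq> S \<Longrightarrow> lenS S (word_prod l C ws) \<le> length ws"
  unfolding lenS_def by (rule Least_le) blast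

lemma lenS_parity: assumes "w \<in> weyl_sub l C S" "S \<subseteq> {..<l}"
  shows "det w = (-1) ^ lenS S w"
proof -
  obtain ws where "set ws \<subseteq> S" "length ws = lenS S w" "word_prod l C ws = w"
    using assms lenS_word by blast
  then show ?thesis using det_word_prod assms by fastforce
qed

lemma lenS_mult: assumes "a \<in> weyl_sub l C S" "b \<in> weyl_sub l C S"
  shows "lenS S (a * b) \<le> lenS S a + lenS S b"
proof -
  obtain as where as: "set as \<subseteq> S" "length as = lenS S a" "word_prod l C as = a"
    using assms lenS_word by blast
  obtain bs where bs: "set bs \<subseteq> S" "length bs = lenS S b" "word_prod l C bs = b"
    using assms lenS_word by blast
  have "lenS S (word_prod l C (as @ bs)) \<le> length (as @ bs)"
    using as bs by (intro lenS_le) auto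
  then show ?thesis using as bs by (simp add: word_prod_append)
qed

lemma lenS_srefl_le: "i \<in> S \<Longrightarrow> lenS S (srefl l C i) \<le> 1"
  using lenS_le[of "[i]" S] by simp

lemma lenS_one: "lenS S (1\<^sub>m l) = 0"
  using lenS_le[of "[]" S] by simp

lemma lenS_zero: assumes "w \<in> weyl_sub l C S" "lenS S w = 0" shows "w = 1\<^sub>m l"
  using lenS_word[OF assms(1)] assms(2) by force

lemma lenS_mono: assumes "S \<subseteq> T" "w \<in> weyl_sub l C S" shows "lenS T w \<le> lenS S w"
proof -
  obtain ws where "set ws \<subseteq> S" "length ws = lenS S w" "word_prod l C ws = w"
    using assms lenS_word by blast
  then show ?thesis using lenS_le[of ws T] assms by auto
qed

lemma srefl_sq': "i < l \<Longrightarrow> M \<in> carrier_mat l l \<Longrightarrow> M * srefl l C i * srefl l C i = M"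
  by (metis assoc_mult_mat right_mult_one_mat srefl_carrier srefl_sq)

lemma lenS_srefl: assumes "w \<in> weyl_sub l C S" "S \<subseteq> {..<l}" "i \<in> S"
  shows "lenS S (w * srefl l C i) = lenS S w + 1 \<or> lenS S (w * srefl l C i) + 1 = lenS S w"
proof -
  have il: "i < l" using assms by auto
  have ws: "w * srefl l C i \<in> weyl_sub l C S" using assms WS_mult WS_srefl by blast
  have a: "lenS S (w * srefl l C i) \<le> lenS S w + 1"
    using lenS_mult[OF assms(1) WS_srefl[OF assms(3)]] lenS_srefl_le[OF assms(3)] by linarith
  have "lenS S (w * srefl l C i * srefl l C i) \<le> lenS S (w * srefl l C i) + 1"
    using lenS_mult[OF ws WS_srefl[OF assms(3)]] lenS_srefl_le[OF assms(3)] by linarith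
  then have b: "lenS S w \<le> lenS S (w * srefl l C i) + 1"
    using srefl_sq'[OF il WS_carrier[OF assms(1)]] by simp
  have "det (w * srefl l C i) = - det w"
    using det_mult[OF WS_carrier[OF assms(1)] srefl_carrier] det_srefl[OF il] by simp
  then have "(-1::int) ^ lenS S (w * srefl l C i) = - ((-1) ^ lenS S w)"
    using lenS_parity[OF ws assms(2)] lenS_parity[OF assms(1,2)] by simp
  then have "lenS S (w * srefl l C i) \<noteq> lenS S w" by auto
  then show ?thesis using a b by linarith
qed

end


context cartan begin

definition phi :: "nat \<Rightarrow> (nat \<Rightarrow> int) \<Rightarrow> int" where
  "phi i x = (\<Sum>m<l. C m i * x m)"

definition act :: "nat \<Rightarrow> (nat \<Rightarrow> int) \<Rightarrow> (nat \<Rightarrow> int)" where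
  "act i x = (\<lambda>k. if k = i then x k - phi i x else x k)"

definition wact :: "nat list \<Rightarrow> (nat \<Rightarrow> int) \<Rightarrow> (nat \<Rightarrow> int)" where
  "wact ws x = foldr act ws x"

definition dl :: "nat \<Rightarrow> nat \<Rightarrow> int" where
  "dl j = (\<lambda>k. if k = j then 1 else 0)"

lemma wact_Nil[simp]: "wact [] x = x" unfolding wact_def by simp
lemma wact_Cons[simp]: "wact (i # ws) x = act i (wact ws x)" unfolding wact_def by simp
lemma wact_append: "wact (xs @ ys) x = wact xs (wact ys x)" unfolding wact_def by simp

lemma word_prod_col: assumes "set ws \<subseteq> {..<l}" "k < l" "j < l"
  shows "word_prod l C ws $$ (k, j) = wact ws (dl j) k"
  using assms(1,2)
proof (induction ws arbitrary: k)
  case Nil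
  then show ?case using assms by (simp add: dl_def)
next
  case (Cons i ws)
  have "word_prod l C (i # ws) $$ (k, j) = word_prod l C ws $$ (k, j) -
     (if k = i then (\<Sum>m<l. C m i * word_prod l C ws $$ (m, j)) else 0)"
    using Cons.prems assms by (simp add: srefl_mult_index del: index_mult_mat)
  also have "\<dots> = act i (wact ws (dl j)) k"
    using Cons by (auto simp: act_def phi_def intro!: sum.cong)
  finally show ?case by simp
qed

lemma mat_eq_wact: assumes "set xs \<subseteq> {..<l}" "set ys \<subseteq> {..<l}"
  "\<And>j k. j < l \<Longrightarrow> k < l \<Longrightarrow> wact xs (dl j) k = wact ys (dl j) k"
  shows "word_prod l C xs = word_prod l C ys"
  by (rule eq_matI) (use assms in \<open>auto simp: word_prod_col\<close>)

lemma sum2: assumes "s < l" "t < l" "s \<noteq> t" "\<And>i. i \<noteq> s \<Longrightarrow> i \<noteq> t \<Longrightarrow> g i = 0"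
  shows "(\<Sum>i<l. g i) = g s + g t"
proof -
  have "(\<Sum>i<l. g i) = (\<Sum>i\<in>{s,t}. g i)"
    using assms by (intro sum.mono_neutral_right) auto
  then show ?thesis using assms by simp
qed

lemma rank2_bound: assumes "s < l" "t < l" "s \<noteq> t" shows "C s t * C t s \<le> 3"
proof (rule ccontr)
  assume "\<not> ?thesis"
  then have n4: "C s t * C t s \<ge> 4" by simp
  obtain e :: "nat \<Rightarrow> real" where epos: "\<forall>i<l. e i > 0"
    and esym: "\<forall>i<l. \<forall>j<l. of_int (C i j) * e j = of_int (C j i) * e i"
    and pd: "\<forall>x::nat \<Rightarrow> real. (\<exists>i<l. x i \<noteq> 0) \<longrightarrow>
            (\<Sum>i<l. \<Sum>j<l. x i * (of_int (C i j) * e j) * x j) > 0"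
    using cft unfolding cartan_finite_type_def by blast
  define \<beta> where "\<beta> = of_int (C s t) * e t"
  have b2: "\<beta> = of_int (C t s) * e s" using esym assms \<beta>_def by auto
  have "\<beta> * \<beta> = of_int (C s t * C t s) * (e s * e t)"
    by (simp add: \<beta>_def b2[symmetric])
  moreover have "of_int (C s t * C t s) \<ge> (4::real)" using n4 by linarith
  moreover have "e s * e t \<ge> 0" using epos assms by (simp add: less_imp_le)
  ultimately have bb: "\<beta> * \<beta> \<ge> 4 * (e s * e t)"
    by (metis mult_right_mono)
  define x where "x = (\<lambda>k. if k = s then - \<beta> else if k = t then 2 * e s else 0)"
  have "\<exists>i<l. x i \<noteq> 0" using assms epos by (intro exI[of _ t]) (auto simp: x_def)
  then have "(\<Sum>i<l. \<Sum>j<l. x i * (of_int (C i j) * e j) * x j) > 0"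
    using pd by blast
  moreover have "(\<Sum>i<l. \<Sum>j<l. x i * (of_int (C i j) * e j) * x j)
     = 2 * e s * (4 * (e s * e t) - \<beta> * \<beta>)"
  proof -
    have inner: "(\<Sum>j<l. x i * (of_int (C i j) * e j) * x j) = x i * (of_int (C i s) * e s) * x s + x i * (of_int (C i t) * e t) * x t" for i
      by (rule sum2) (use assms in \<open>auto simp: x_def\<close>)
    have "(\<Sum>i<l. \<Sum>j<l. x i * (of_int (C i j) * e j) * x j) =
       (x s * (of_int (C s s) * e s) * x s + x s * (of_int (C s t) * e t) * x t) +
       (x t * (of_int (C t s) * e s) * x s + x t * (of_int (C t t) * e t) * x t)"
      unfolding inner by (rule sum2) (use assms in \<open>auto simp: x_def\<close>)
    also have "\<dots> = (-\<beta>) * (2 * e s) * (-\<beta>) + (-\<beta>) * \<beta> * (2 * e s) + (2 * e s) * \<beta> * (-\<beta>) + (2 * e s) * (2 * e t) * (2 * e s)"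
      using assms by (simp only: x_def Cdiag \<beta>_def[symmetric] b2[symmetric] if_True if_False) simp
    also have "\<dots> = 2 * e s * (4 * (e s * e t) - \<beta> * \<beta>)"
      by (simp add: algebra_simps)
    finally show ?thesis .
  qed
  moreover have "2 * e s * (4 * (e s * e t) - \<beta> * \<beta>) \<le> 0"
  proof -
    have "e s > 0" using epos assms by auto
    moreover have "4 * (e s * e t) - \<beta> * \<beta> \<le> 0" using bb by simp
    ultimately show ?thesis by (simp add: mult_nonneg_nonpos)
  qed
  ultimately show False by simp
qed

lemma rank2_cases: assumes "s < l" "t < l" "s \<noteq> t"
  shows "(C s t = 0 \<and> C t s = 0) \<or> (C s t = -1 \<and> C t s = -1) \<or> (C s t = -1 \<and> C t s = -2)
    \<or> (C s t = -2 \<and> C t s = -1) \<or> (C s t = -1 \<and> C t s = -3) \<or> (C s t = -3 \<and> C t s = -1)"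
proof -
  have a: "C s t \<le> 0" "C t s \<le> 0" using Coff assms by auto
  have z: "C s t = 0 \<longleftrightarrow> C t s = 0" using Czero assms by auto
  have p: "C s t * C t s \<le> 3" using rank2_bound assms by auto
  show ?thesis
  proof (cases "C s t = 0")
    case True then show ?thesis using z by simp
  next
    case False
    then have n: "C s t \<le> -1" "C t s \<le> -1" using a z by auto
    have "C s t \<ge> -3"
    proof (rule ccontr)
      assume "\<not> C s t \<ge> -3"
      then have "C s t \<le> -4" by simp
      then have "C s t * C t s \<ge> (-4) * C t s" using n by (intro mult_right_mono_neg) auto
      then show False using n p by linarith
    qed
    moreover have "C t s \<ge> -3"
    proof (rule ccontr)
      assume "\<not> C t s \<ge> -3"
      then have "C t s \<le> -4" by simp
      then have "C s t * C t s \<ge> C s t * (-4)" using n by (intro mult_left_mono_neg) auto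
      then show False using n p by linarith
    qed
    ultimately have "C s t \<in> {-3,-2,-1}" "C t s \<in> {-3,-2,-1}" using n by auto
    then show ?thesis using p by auto
  qed
qed


definition V :: "nat \<Rightarrow> nat \<Rightarrow> (nat \<Rightarrow> int) \<Rightarrow> int \<Rightarrow> int \<Rightarrow> (nat \<Rightarrow> int)" where
  "V s t x a b = (\<lambda>k. x k + (if k = s then a else 0) + (if k = t then b else 0))"

lemma phi_V: assumes "s < l" "t < l" "s \<noteq> t"
  shows "phi i (V s t x a b) = phi i x + C s i * a + C t i * b"
proof -
  have "phi i (V s t x a b) = (\<Sum>m<l. C m i * x m) + (\<Sum>m<l. (if m = s then C m i * a else 0)) + (\<Sum>m<l. (if m = t then C m i * b else 0))"
  proof -
    have "phi i (V s t x a b) = (\<Sum>m<l. C m i * x m + (if m = s then C m i * a else 0) + (if m = t then C m i * b else 0))"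
      unfolding phi_def V_def by (intro sum.cong) (auto simp: algebra_simps)
    then show ?thesis by (simp add: sum.distrib)
  qed
  then show ?thesis using assms by (simp add: phi_def)
qed

lemma act_V: assumes "s < l" "t < l" "s \<noteq> t"
  shows "act s (V s t x a b) = V s t x (- a - phi s x - b * C t s) b"
    "act t (V s t x a b) = V s t x a (- b - phi t x - a * C s t)"
proof -
  have p1: "phi s (V s t x a b) = phi s x + 2 * a + C t s * b" using phi_V[OF assms] Cdiag assms by simp
  have p2: "phi t (V s t x a b) = phi t x + C s t * a + 2 * b" using phi_V[OF assms] Cdiag assms by simp
  show "act s (V s t x a b) = V s t x (- a - phi s x - b * C t s) b"
    unfolding act_def p1 using assms by (auto simp: V_def fun_eq_iff algebra_simps)
  show "act t (V s t x a b) = V s t x a (- b - phi t x - a * C s t)"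
    unfolding act_def p2 using assms by (auto simp: V_def fun_eq_iff algebra_simps)
qed

definition st2 :: "nat \<Rightarrow> nat \<Rightarrow> int \<Rightarrow> int \<Rightarrow> nat \<Rightarrow> int \<times> int \<Rightarrow> int \<times> int" where
  "st2 s t p q i ab = (if i = s then (- fst ab - p - snd ab * C t s, snd ab) else (fst ab, - snd ab - q - fst ab * C s t))"

lemma wact_V: assumes "s < l" "t < l" "s \<noteq> t" "set ws \<subseteq> {s, t}"
  shows "wact ws (V s t x a b) = V s t x (fst (foldr (st2 s t (phi s x) (phi t x)) ws (a, b))) (snd (foldr (st2 s t (phi s x) (phi t x)) ws (a, b)))"
  using assms(4)
proof (induction ws)
  case Nil
  then show ?case by simp
next
  case (Cons i ws)
  then have "i = s \<or> i = t" by auto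
  then show ?case using Cons assms by (auto simp: act_V st2_def)
qed

fun altE :: "nat \<Rightarrow> nat \<Rightarrow> nat \<Rightarrow> nat list" where
  "altE x y 0 = []"
| "altE x y (Suc n) = altE y x n @ [x]"

lemma altE_set: "set (altE x y n) \<subseteq> {x, y}"
  by (induction n arbitrary: x y) auto

lemma altE_length[simp]: "length (altE x y n) = n"
  by (induction n arbitrary: x y) auto

definition mcox :: "nat \<Rightarrow> nat \<Rightarrow> nat" where
  "mcox s t = (if C s t * C t s = 0 then 2 else if C s t * C t s = 1 then 3 else if C s t * C t s = 2 then 4 else 6)"

lemma dl_V: "dl j = V s t (dl j) 0 0" unfolding V_def by simp

lemma braid: assumes "s < l" "t < l" "s \<noteq> t"
  shows "word_prod l C (altE s t (mcox s t)) = word_prod l C (altE t s (mcox s t))"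
proof (rule mat_eq_wact)
  show "set (altE s t (mcox s t)) \<subseteq> {..<l}" "set (altE t s (mcox s t)) \<subseteq> {..<l}"
    using altE_set assms by blast+
  fix j k assume "j < l" "k < l"
  have st: "set (altE s t (mcox s t)) \<subseteq> {s, t}" "set (altE t s (mcox s t)) \<subseteq> {s, t}"
    using altE_set by blast+
  have "foldr (st2 s t p q) (altE s t (mcox s t)) (0, 0) = foldr (st2 s t p q) (altE t s (mcox s t)) (0, 0)" for p q
    using rank2_cases[OF assms] assms
    by (elim disjE) (simp_all add: mcox_def eval_nat_numeral st2_def algebra_simps)
  then show "wact (altE s t (mcox s t)) (dl j) k = wact (altE t s (mcox s t)) (dl j) k"
    by (subst (1 2) dl_V[of j s t]) (simp only: wact_V[OF assms st(1)] wact_V[OF assms st(2)])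
qed

lemma rank2_pos: assumes "s < l" "t < l" "s \<noteq> t" "n < mcox s t"
  shows "\<exists>a b. a \<ge> 0 \<and> b \<ge> 0 \<and> wact (altE t s n) (dl s) = V s t (\<lambda>_. 0) a b"
proof -
  have dv: "dl s = V s t (\<lambda>_. 0) 1 0" unfolding V_def dl_def using assms by auto
  have ph: "phi i (\<lambda>_. 0) = 0" for i by (simp add: phi_def)
  have st: "set (altE t s n) \<subseteq> {s, t}" using altE_set by blast
  have "fst (foldr (st2 s t 0 0) (altE t s n) (1, 0)) \<ge> 0 \<and> snd (foldr (st2 s t 0 0) (altE t s n) (1, 0)) \<ge> 0"
    using rank2_cases[OF assms(1-3)] assms(3,4)
    by (elim disjE) (auto simp: mcox_def eval_nat_numeral less_Suc_eq st2_def)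
  then show ?thesis unfolding dv wact_V[OF assms(1-3) st] ph by blast
qed


end


context cartan begin

lemma altE_decomp: "\<exists>P. altE x y (k + m) = P @ altE x y m"
proof (induction m arbitrary: x y)
  case 0
  then show ?case by simp
next
  case (Suc m)
  obtain P where "altE y x (k + m) = P @ altE y x m" using Suc by blast
  then show ?case by (intro exI[of _ P]) simp
qed

lemma altE_last: "n > 0 \<Longrightarrow> last (altE x y n) = x"
  by (cases n) auto

definition noadj :: "nat list \<Rightarrow> bool" where
  "noadj ws \<longleftrightarrow> (\<forall>i. Suc i < length ws \<longrightarrow> ws ! i \<noteq> ws ! Suc i)"

lemma noadj_snoc: "noadj (zs @ [z]) \<Longrightarrow> noadj zs \<and> (zs \<noteq> [] \<longrightarrow> last zs \<noteq> z)"
proof -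
  assume a: "noadj (zs @ [z])"
  have "noadj zs" unfolding noadj_def
  proof (intro allI impI)
    fix i assume "Suc i < length zs"
    then show "zs ! i \<noteq> zs ! Suc i" using a[unfolded noadj_def, rule_format, of i] by (simp add: nth_append)
  qed
  moreover have "last zs \<noteq> z" if "zs \<noteq> []"
  proof -
    have "Suc (length zs - 1) < length (zs @ [z])" using that by simp
    then have "(zs @ [z]) ! (length zs - 1) \<noteq> (zs @ [z]) ! Suc (length zs - 1)"
      using a unfolding noadj_def by blast
    then show ?thesis using that by (simp add: nth_append last_conv_nth)
  qed
  ultimately show ?thesis by blast
qed

lemma alt_char: "set ws \<subseteq> {x, y} \<Longrightarrow> x \<noteq> y \<Longrightarrow> noadj ws \<Longrightarrow> (ws \<noteq> [] \<longrightarrow> last ws = x)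
  \<Longrightarrow> ws = altE x y (length ws)"
proof (induction ws arbitrary: x y rule: rev_induct)
  case Nil
  then show ?case by simp
next
  case (snoc z zs)
  have zx: "z = x" using snoc.prems by simp
  have na: "noadj zs" and lz: "zs \<noteq> [] \<longrightarrow> last zs \<noteq> z" using noadj_snoc[OF snoc.prems(3)] by auto
  have "zs \<noteq> [] \<longrightarrow> last zs = y"
  proof
    assume ne: "zs \<noteq> []"
    have "last zs \<in> set (zs @ [z])" using ne by simp
    then have "last zs \<in> {x, y}" using snoc.prems(1) by blast
    then show "last zs = y" using lz zx ne by blast
  qed
  then have "zs = altE y x (length zs)"
    using snoc.IH[of y x] snoc.prems na by auto
  then show ?case using zx by simp
qed

lemma word_prod_cancel: "a < l \<Longrightarrow> word_prod l C (xs @ a # a # ys) = word_prod l C (xs @ ys)"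
proof -
  assume a: "a < l"
  have "word_prod l C (a # a # ys) = word_prod l C ys"
    using a by (simp add: assoc_mult_mat[symmetric, of _ l l _ l _ l] srefl_sq left_mult_one_mat[of _ l l])
  then show ?thesis by (simp add: word_prod_append)
qed

lemma reduced_noadj: assumes "set ws \<subseteq> S" "S \<subseteq> {..<l}" "length ws = lenS S (word_prod l C ws)"
  shows "noadj ws"
  unfolding noadj_def
proof (intro allI impI notI)
  fix i assume i: "Suc i < length ws" and eq: "ws ! i = ws ! Suc i"
  define a where "a = ws ! i"
  have d1: "drop i ws = ws ! i # drop (Suc i) ws" using i by (simp add: Cons_nth_drop_Suc)
  have d2: "drop (Suc i) ws = ws ! Suc i # drop (Suc (Suc i)) ws" using i by (simp add: Cons_nth_drop_Suc)
  have dec: "ws = take i ws @ a # a # drop (Suc (Suc i)) ws"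
    using d1 d2 eq unfolding a_def by (metis append_take_drop_id)
  have "a \<in> set ws" using i a_def by simp
  then have al: "a < l" using assms by auto
  have "word_prod l C ws = word_prod l C (take i ws @ drop (Suc (Suc i)) ws)"
    by (subst dec) (rule word_prod_cancel[OF al])
  moreover have "set (take i ws @ drop (Suc (Suc i)) ws) \<subseteq> S"
    using assms(1) set_take_subset[of i ws] set_drop_subset[of "Suc (Suc i)" ws] by auto
  ultimately have "lenS S (word_prod l C ws) \<le> length (take i ws @ drop (Suc (Suc i)) ws)"
    using lenS_le by metis
  then show False using assms(3) i by simp
qed

lemma last_shorten: assumes "set ws \<subseteq> S" "S \<subseteq> {..<l}" "ws \<noteq> []" "last ws = s"
  shows "lenS S (word_prod l C ws * srefl l C s) \<le> length ws - 1"
proof -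
  have ws: "ws = butlast ws @ [s]" using assms(3,4) append_butlast_last_id[symmetric, of ws] by simp
  have "s \<in> set ws" using assms(3,4) by auto
  then have sl: "s < l" using assms by auto
  have "word_prod l C ws * srefl l C s = word_prod l C (butlast ws)"
    by (subst ws, simp add: word_prod_append srefl_sq' sl)
  moreover have "set (butlast ws) \<subseteq> S" using assms(1) in_set_butlastD by fastforce
  ultimately show ?thesis using lenS_le[of "butlast ws" S] by simp
qed

lemma rank2_lemma: assumes "s < l" "t < l" "s \<noteq> t" "vI \<in> weyl_sub l C {s, t}"
  "lenS {s, t} (vI * srefl l C s) > lenS {s, t} vI"
  shows "\<forall>k<l. vI $$ (k, s) \<ge> 0 \<and> (k \<noteq> s \<and> k \<noteq> t \<longrightarrow> vI $$ (k, s) = 0)"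
proof -
  let ?I = "{s, t}"
  have Il: "?I \<subseteq> {..<l}" using assms by auto
  obtain ws where ws: "set ws \<subseteq> ?I" "length ws = lenS ?I vI" "word_prod l C ws = vI"
    using assms(4) lenS_word by blast
  have na: "noadj ws" using reduced_noadj[OF ws(1) Il] ws by simp
  have ls: "ws \<noteq> [] \<longrightarrow> last ws = t"
  proof
    assume ne: "ws \<noteq> []"
    have "last ws \<noteq> s"
    proof
      assume "last ws = s"
      then have "lenS ?I (vI * srefl l C s) \<le> length ws - 1"
        using last_shorten[OF ws(1) Il ne] ws by simp
      then show False using assms(5) ws ne by simp
    qed
    moreover have "last ws \<in> ?I" using ne ws(1) last_in_set by blast
    ultimately show "last ws = t" by blast
  qed
  have "set ws \<subseteq> {t, s}" using ws(1) by auto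
  then have wsa: "ws = altE t s (length ws)"
    using alt_char[OF _ _ na] ls assms(3) by auto
  have nm: "length ws < mcox s t"
  proof (rule ccontr)
    assume "\<not> ?thesis"
    then have "length ws = (length ws - mcox s t) + mcox s t" by simp
    then obtain k where k: "length ws = k + mcox s t" by blast
    obtain P where P: "altE t s (length ws) = P @ altE t s (mcox s t)"
      using altE_decomp[of t s k "mcox s t"] k by auto
    have mc: "mcox t s = mcox s t" unfolding mcox_def by (simp add: mult.commute)
    have mpos: "mcox s t > 0" unfolding mcox_def by simp
    define ws' where "ws' = P @ altE s t (mcox s t)"
    have "word_prod l C ws' = word_prod l C ws"
    proof -
      have "word_prod l C ws = word_prod l C (P @ altE t s (mcox s t))" using wsa P by simp
      also have "\<dots> = word_prod l C (P @ altE s t (mcox s t))"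
        by (simp only: word_prod_append braid[OF assms(1-3)])
      finally show ?thesis unfolding ws'_def by simp
    qed
    moreover have "set ws' \<subseteq> ?I"
      using ws(1) wsa P altE_set[of s t "mcox s t"] unfolding ws'_def
    proof -
      have "set P \<subseteq> set ws" using wsa P by (metis Un_upper1 set_append)
      then show "set (P @ altE s t (mcox s t)) \<subseteq> {s, t}" using ws(1) altE_set[of s t "mcox s t"] by auto
    qed
    moreover have ne: "altE s t (mcox s t) \<noteq> []" using mpos
      by (metis altE_length less_numeral_extra(3) list.size(3))
    moreover have "ws' \<noteq> []" "last ws' = s" unfolding ws'_def using ne mpos altE_last[of _ s t]
      by (auto simp: last_append)
    moreover have "length ws' = length ws" unfolding ws'_def
      using arg_cong[OF P, of length] by simp
    ultimately have "lenS ?I (vI * srefl l C s) \<le> length ws - 1"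
      using last_shorten[OF _ Il, of ws' s] ws by simp
    then show False using assms(5) ws by simp
  qed
  obtain a b where ab: "a \<ge> 0" "b \<ge> 0" "wact (altE t s (length ws)) (dl s) = V s t (\<lambda>_. 0) a b"
    using rank2_pos[OF assms(1-3) nm] by blast
  show ?thesis
  proof (intro allI impI)
    fix k assume k: "k < l"
    have "vI $$ (k, s) = wact ws (dl s) k"
      using word_prod_col[of ws k s] ws Il k assms by auto
    also have "\<dots> = V s t (\<lambda>_. 0) a b k" using ab(3) wsa by simp
    finally show "vI $$ (k, s) \<ge> 0 \<and> (k \<noteq> s \<and> k \<noteq> t \<longrightarrow> vI $$ (k, s) = 0)"
      using ab by (auto simp: V_def)
  qed
qed

end


context cartan begin

lemma reassoc: assumes "v \<in> carrier_mat l l" "vI \<in> carrier_mat l l" "x < l"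
  shows "(v * srefl l C x) * (srefl l C x * vI) = v * vI"
proof -
  have "(v * srefl l C x) * (srefl l C x * vI) = v * (srefl l C x * (srefl l C x * vI))"
    by (rule assoc_mult_mat[of v l l "srefl l C x" l "srefl l C x * vI" l]) (use assms in auto)
  also have "\<dots> = v * ((srefl l C x * srefl l C x) * vI)"
    using assoc_mult_mat[of "srefl l C x" l l "srefl l C x" l vI l] assms by simp
  also have "\<dots> = v * vI" using assms by (simp add: srefl_sq left_mult_one_mat[of _ l l])
  finally show ?thesis .
qed

lemma sum2l: assumes "s < l" "t < l" "s \<noteq> t" "\<And>i. i < l \<Longrightarrow> i \<noteq> s \<Longrightarrow> i \<noteq> t \<Longrightarrow> g i = 0"
  shows "(\<Sum>i<l. g i) = g s + g t"
proof -
  have "(\<Sum>i<l. g i) = (\<Sum>i\<in>{s,t}. g i)"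
    using assms by (intro sum.mono_neutral_right) auto
  then show ?thesis using assms by simp
qed

lemma lenS_srefl_one: assumes "i \<in> S" "S \<subseteq> {..<l}" shows "lenS S (srefl l C i) = 1"
proof -
  have il: "i < l" using assms by auto
  have "lenS S (srefl l C i) \<noteq> 0"
  proof
    assume "lenS S (srefl l C i) = 0"
    then have "srefl l C i = 1\<^sub>m l" using lenS_zero WS_srefl assms by blast
    then show False using det_srefl[OF il] by simp
  qed
  then show ?thesis using lenS_srefl_le[OF assms(1)] by simp
qed

lemma WS_cols_outside: assumes "w \<in> weyl_sub l C S" "k < l" "j < l" "k \<notin> S" "S \<subseteq> {..<l}"
  shows "w $$ (k, j) = (if k = j then 1 else 0)"
proof -
  obtain ws where ws: "set ws \<subseteq> S" "word_prod l C ws = w" using assms weyl_subE by blast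
  have "set ws \<subseteq> S \<Longrightarrow> word_prod l C ws $$ (k, j) = (if k = j then 1 else 0)"
  proof (induction ws)
    case Nil then show ?case using assms by simp
  next
    case (Cons i ws)
    then have "k \<noteq> i" "i < l" using assms by auto
    then show ?case using Cons assms
      by (simp add: srefl_mult_index[OF word_prod_carrier] del: index_mult_mat)
  qed
  then show ?thesis using ws by simp
qed

theorem key_lemma: assumes S: "S \<subseteq> {..<l}"
  shows "w \<in> weyl_sub l C S \<Longrightarrow> s \<in> S \<Longrightarrow> lenS S (w * srefl l C s) > lenS S w \<Longrightarrow> k < l \<Longrightarrow> w $$ (k, s) \<ge> 0"
proof -
  have main: "\<forall>w s. w \<in> weyl_sub l C S \<longrightarrow> s \<in> S \<longrightarrow> lenS S w = n \<longrightarrow> lenS S (w * srefl l C s) > n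
      \<longrightarrow> (\<forall>k<l. w $$ (k, s) \<ge> 0)" for n
  proof (induction n rule: less_induct)
    case (less n)
    show ?case
    proof (intro allI impI)
      fix w s k assume w: "w \<in> weyl_sub l C S" and s: "s \<in> S" and n: "lenS S w = n"
        and gt: "lenS S (w * srefl l C s) > n" and k: "k < l"
      have sl: "s < l" using s S by auto
      have wc: "w \<in> carrier_mat l l" using WS_carrier w by blast
      show "w $$ (k, s) \<ge> 0"
      proof (cases "n = 0")
        case True
        then have "w = 1\<^sub>m l" using lenS_zero w n by blast
        then show ?thesis using k sl by simp
      next
        case False
        obtain ws where ws: "set ws \<subseteq> S" "length ws = n" "word_prod l C ws = w"
          using lenS_word[OF w] n by blast
        have ne: "ws \<noteq> []" using ws False by auto
        define t where "t = last ws"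
        define wt where "wt = word_prod l C (butlast ws)"
        have tS: "t \<in> S" using ne ws t_def last_in_set by blast
        have tl: "t < l" using tS S by auto
        have bS: "set (butlast ws) \<subseteq> S" using ws(1) in_set_butlastD by fastforce
        have wtW: "wt \<in> weyl_sub l C S" unfolding wt_def using bS by (rule weyl_subI)
        have wtc: "wt \<in> carrier_mat l l" unfolding wt_def by simp
        have wdec: "w = wt * srefl l C t"
        proof -
          have "ws = butlast ws @ [t]" using ne t_def by simp
          then have "word_prod l C ws = word_prod l C (butlast ws @ [t])" by simp
          then show ?thesis using ws(3) unfolding wt_def by (simp add: word_prod_append)
        qed
        have lwt1: "lenS S wt \<le> n - 1" unfolding wt_def using lenS_le[OF bS] ws by simp
        have "n \<le> lenS S wt + 1"
          using lenS_mult[OF wtW WS_srefl[OF tS]] lenS_srefl_le[OF tS] wdec n by simp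
        then have lwt: "lenS S wt = n - 1" using lwt1 by simp
        have ts: "t \<noteq> s"
        proof
          assume "t = s"
          then have "w * srefl l C s = wt" using wdec srefl_sq'[OF tl wtc] by simp
          then show False using gt lwt by simp
        qed
        define I where "I = {s, t}"
        have IS: "I \<subseteq> S" using s tS I_def by auto
        have Il: "I \<subseteq> {..<l}" using IS S by auto
        define A where "A = {(v, vI). v \<in> weyl_sub l C S \<and> vI \<in> weyl_sub l C I \<and> w = v * vI \<and> n = lenS S v + lenS I vI}"
        have "(wt, srefl l C t) \<in> A"
          unfolding A_def using wtW WS_srefl[of t I] lenS_srefl_one[of t I] wdec lwt False Il I_def
          by auto
        then obtain p where pA: "p \<in> A" and pmin: "\<And>q. q \<in> A \<Longrightarrow> lenS S (fst p) \<le> lenS S (fst q)"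
          using ex_has_least_nat[of "\<lambda>q. q \<in> A" _ "\<lambda>q. lenS S (fst q)"] by blast
        obtain v vI where p: "p = (v, vI)" by (cases p)
        have vW: "v \<in> weyl_sub l C S" and vIW: "vI \<in> weyl_sub l C I" and wv: "w = v * vI"
          and nv: "n = lenS S v + lenS I vI" using pA p unfolding A_def by auto
        have vc: "v \<in> carrier_mat l l" and vIc: "vI \<in> carrier_mat l l" using vW vIW WS_carrier by auto
        have vle: "lenS S v \<le> n - 1" using pmin[OF \<open>(wt, srefl l C t) \<in> A\<close>] p lwt by simp
        have asc: "lenS S (v * srefl l C x) > lenS S v" if xI: "x \<in> I" for x
        proof (rule ccontr)
          assume na: "\<not> ?thesis"
          have xS: "x \<in> S" and xl: "x < l" using xI IS S by auto
          have dec: "lenS S (v * srefl l C x) + 1 = lenS S v"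
            using lenS_srefl[OF vW S xS] na by auto
          moreover have vxW: "v * srefl l C x \<in> weyl_sub l C S" using vW WS_srefl[OF xS] WS_mult by blast
          moreover have xvW: "srefl l C x * vI \<in> weyl_sub l C I" using vIW WS_srefl[OF xI] WS_mult by blast
          moreover have wx: "w = (v * srefl l C x) * (srefl l C x * vI)" using wv reassoc[OF vc vIc xl] by simp
          moreover have "lenS I (srefl l C x * vI) \<le> 1 + lenS I vI"
            using lenS_mult[OF WS_srefl[OF xI] vIW] lenS_srefl_le[OF xI] by simp
          moreover have "n \<le> lenS S (v * srefl l C x) + lenS S (srefl l C x * vI)"
            using lenS_mult[OF vxW] xvW WS_mono[OF IS] wx n by blast
          moreover have "lenS S (srefl l C x * vI) \<le> lenS I (srefl l C x * vI)"
            using lenS_mono[OF IS xvW] .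
          ultimately have "(v * srefl l C x, srefl l C x * vI) \<in> A"
            unfolding A_def using nv by auto
          from pmin[OF this] p have "lenS S v \<le> lenS S (v * srefl l C x)" by simp
          then show False using dec by simp
        qed
        have vs: "\<forall>k<l. v $$ (k, s) \<ge> 0" and vt: "\<forall>k<l. v $$ (k, t) \<ge> 0"
          using less.IH[of "lenS S v"] vle False vW asc[of s] asc[of t] s tS I_def by auto
        have ascI: "lenS I (vI * srefl l C s) > lenS I vI"
        proof (rule ccontr)
          assume na: "\<not> ?thesis"
          have sI: "s \<in> I" using I_def by simp
          have "lenS I (vI * srefl l C s) + 1 = lenS I vI"
            using lenS_srefl[OF vIW Il sI] na by auto
          moreover have vIsW: "vI * srefl l C s \<in> weyl_sub l C I" using vIW WS_srefl[OF sI] WS_mult by blast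
          moreover have weq: "w * srefl l C s = v * (vI * srefl l C s)"
            using wv vc vIc by (simp add: assoc_mult_mat[of _ l l _ l _ l])
          moreover have "lenS S (w * srefl l C s) \<le> lenS S v + lenS S (vI * srefl l C s)"
            unfolding weq using lenS_mult[OF vW] vIsW WS_mono[OF IS] by blast
          moreover have "lenS S (vI * srefl l C s) \<le> lenS I (vI * srefl l C s)"
            using lenS_mono[OF IS vIsW] .
          ultimately show False using gt nv by linarith
        qed
        have r2: "\<forall>k<l. vI $$ (k, s) \<ge> 0 \<and> (k \<noteq> s \<and> k \<noteq> t \<longrightarrow> vI $$ (k, s) = 0)"
          using rank2_lemma[OF sl tl ts[symmetric]] vIW ascI I_def by blast
        have "w $$ (k, s) = (\<Sum>m<l. v $$ (k, m) * vI $$ (m, s))"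
          using wv mult_index[OF vc vIc k sl] by simp
        also have "\<dots> = v $$ (k, s) * vI $$ (s, s) + v $$ (k, t) * vI $$ (t, s)"
          by (rule sum2l) (use sl tl ts r2 in auto)
        also have "\<dots> \<ge> 0" using vs vt r2 k sl tl by simp
        finally show ?thesis .
      qed
    qed
  qed
  assume "w \<in> weyl_sub l C S" "s \<in> S" "lenS S (w * srefl l C s) > lenS S w" "k < l"
  then show "w $$ (k, s) \<ge> 0" using main[of "lenS S w"] by blast
qed

end


context cartan begin

lemma col_neg: assumes "w \<in> weyl_sub l C S" "S \<subseteq> {..<l}" "s \<in> S" "lenS S (w * srefl l C s) < lenS S w" "k < l"
  shows "w $$ (k, s) \<le> 0"
proof -
  have sl: "s < l" using assms by auto
  have wc: "w \<in> carrier_mat l l" using assms WS_carrier by blast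
  define w' where "w' = w * srefl l C s"
  have w'W: "w' \<in> weyl_sub l C S" unfolding w'_def using assms WS_mult WS_srefl by blast
  have ww: "w' * srefl l C s = w" unfolding w'_def using srefl_sq'[OF sl wc] .
  have "w' $$ (k, s) \<ge> 0"
    using key_lemma[OF assms(2) w'W assms(3)] ww assms(4,5) unfolding w'_def by simp
  moreover have "w $$ (k, s) = - w' $$ (k, s)"
    using mult_srefl_index[of w' k s s] ww w'W WS_carrier assms sl Cdiag by auto
  ultimately show ?thesis by simp
qed

lemma WS_weyl: "S \<subseteq> {..<l} \<Longrightarrow> weyl_sub l C S \<subseteq> weyl l C"
  by (rule WS_mono)

lemma minrep_pos: assumes "min_rep l C S u" "S \<subseteq> {..<l}" "m \<in> S" "k < l"
  shows "u $$ (k, m) \<ge> 0"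
proof -
  have uW: "u \<in> weyl l C" using assms unfolding min_rep_def by blast
  have ml: "m \<in> {..<l}" using assms by auto
  have "wlen l C u \<le> wlen l C (u * srefl l C m)"
    using assms WS_srefl unfolding min_rep_def by blast
  then have "lenS {..<l} (u * srefl l C m) > lenS {..<l} u"
    using lenS_srefl[OF uW _ ml] unfolding wlen_lenS by auto
  then show ?thesis using key_lemma[OF _ uW ml] assms by auto
qed

lemma nontrivial_neg: assumes "v \<in> weyl_sub l C S" "S \<subseteq> {..<l}" "v \<noteq> 1\<^sub>m l"
  obtains s where "s \<in> S" "\<And>k. k < l \<Longrightarrow> v $$ (k, s) \<le> 0" "\<And>k. k < l \<Longrightarrow> k \<notin> S \<Longrightarrow> v $$ (k, s) = 0"
proof -
  have n0: "lenS S v \<noteq> 0" using lenS_zero assms by blast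
  obtain ws where ws: "set ws \<subseteq> S" "length ws = lenS S v" "word_prod l C ws = v"
    using lenS_word[OF assms(1)] by blast
  have ne: "ws \<noteq> []" using ws n0 by auto
  define s where "s = last ws"
  have sS: "s \<in> S" using ne ws s_def last_in_set by blast
  have "lenS S (v * srefl l C s) \<le> length ws - 1"
    using last_shorten[OF ws(1) assms(2) ne] s_def ws by simp
  then have lt: "lenS S (v * srefl l C s) < lenS S v" using ws n0 by simp
  show ?thesis
  proof (rule that[OF sS])
    fix k assume "k < l" then show "v $$ (k, s) \<le> 0" using col_neg[OF assms(1,2) sS lt] by blast
  next
    fix k assume "k < l" "k \<notin> S"
    then show "v $$ (k, s) = 0" using WS_cols_outside[OF assms(1)] sS assms(2) by auto
  qed
qed

lemma col_nonzero: assumes "u \<in> weyl l C" "s < l"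
  shows "\<exists>k<l. u $$ (k, s) \<noteq> 0"
proof (rule ccontr)
  assume "\<not> ?thesis"
  then have z: "\<forall>k<l. u $$ (k, s) = 0" by simp
  obtain u' where u': "u' \<in> weyl l C" "u' * u = 1\<^sub>m l" using WS_inv[OF assms(1)] by blast
  have "(u' * u) $$ (s, s) = (\<Sum>m<l. u' $$ (s, m) * u $$ (m, s))"
    using mult_index u' assms WS_carrier by blast
  also have "\<dots> = 0" using z by simp
  finally show False using u' assms by simp
qed

lemma weyl_inv: assumes "w \<in> weyl_sub l C S" "S \<subseteq> {..<l}"
  obtains w' where "w' \<in> weyl_sub l C S" "w * w' = 1\<^sub>m l" "w' * w = 1\<^sub>m l"
  using WS_inv assms by blast

lemma coset_unique: assumes S: "S \<subseteq> {..<l}" and u1: "min_rep l C S u1" and u2: "min_rep l C S u2"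
  and v1: "v1 \<in> weyl_sub l C S" and v2: "v2 \<in> weyl_sub l C S" and eq: "u1 * v1 = u2 * v2"
  shows "u1 = u2"
proof -
  have u1W: "u1 \<in> weyl l C" and u2W: "u2 \<in> weyl l C" using u1 u2 unfolding min_rep_def by auto
  have u1c: "u1 \<in> carrier_mat l l" and u2c: "u2 \<in> carrier_mat l l" using u1W u2W WS_carrier by auto
  have v1c: "v1 \<in> carrier_mat l l" and v2c: "v2 \<in> carrier_mat l l" using v1 v2 WS_carrier by auto
  obtain v2' where v2': "v2' \<in> weyl_sub l C S" "v2 * v2' = 1\<^sub>m l" using weyl_inv[OF v2 S] by blast
  have v2'c: "v2' \<in> carrier_mat l l" using v2' WS_carrier by auto
  define v where "v = v1 * v2'"
  have vW: "v \<in> weyl_sub l C S" unfolding v_def using v1 v2' WS_mult by blast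
  have vc: "v \<in> carrier_mat l l" using vW WS_carrier by auto
  have u2eq: "u2 = u1 * v"
  proof -
    have "u2 = u2 * (v2 * v2')" using v2' u2c by simp
    also have "\<dots> = (u2 * v2) * v2'" using u2c v2c v2'c by (simp add: assoc_mult_mat[of _ l l _ l _ l])
    also have "\<dots> = (u1 * v1) * v2'" using eq by simp
    also have "\<dots> = u1 * v" unfolding v_def using u1c v1c v2'c by (simp add: assoc_mult_mat[of _ l l _ l _ l])
    finally show ?thesis .
  qed
  show ?thesis
  proof (cases "v = 1\<^sub>m l")
    case True
    then show ?thesis using u2eq u1c by simp
  next
    case False
    obtain s where sS: "s \<in> S" and neg: "\<And>k. k < l \<Longrightarrow> v $$ (k, s) \<le> 0"
      and out: "\<And>k. k < l \<Longrightarrow> k \<notin> S \<Longrightarrow> v $$ (k, s) = 0"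
      using nontrivial_neg[OF vW S False] by blast
    have sl: "s < l" using sS S by auto
    have "\<forall>k<l. u2 $$ (k, s) = 0"
    proof (intro allI impI)
      fix k assume k: "k < l"
      have "u2 $$ (k, s) = (\<Sum>m<l. u1 $$ (k, m) * v $$ (m, s))"
        using u2eq mult_index[OF u1c vc k sl] by simp
      also have "\<dots> \<le> 0"
      proof (rule sum_nonpos)
        fix m assume "m \<in> {..<l}"
        then have m: "m < l" by simp
        show "u1 $$ (k, m) * v $$ (m, s) \<le> 0"
        proof (cases "m \<in> S")
          case True
          then show ?thesis using minrep_pos[OF u1 S True k] neg[OF m] by (simp add: mult_nonneg_nonpos)
        next
          case False
          then show ?thesis using out[OF m] by simp
        qed
      qed
      finally show "u2 $$ (k, s) = 0" using minrep_pos[OF u2 S sS k] by simp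
    qed
    then show ?thesis using col_nonzero[OF u2W sl] by blast
  qed
qed

lemma coset_exists: assumes S: "S \<subseteq> {..<l}" and w: "w \<in> weyl l C"
  shows "\<exists>u v. min_rep l C S u \<and> v \<in> weyl_sub l C S \<and> w = u * v"
proof -
  have "\<exists>v0. v0 \<in> weyl_sub l C S" using WS_one by blast
  then obtain v0 where v0: "v0 \<in> weyl_sub l C S"
    and v0min: "\<And>v. v \<in> weyl_sub l C S \<Longrightarrow> wlen l C (w * v0) \<le> wlen l C (w * v)"
    using ex_has_least_nat[of "\<lambda>v. v \<in> weyl_sub l C S" _ "\<lambda>v. wlen l C (w * v)"] by blast
  have wc: "w \<in> carrier_mat l l" using w WS_carrier by blast
  have v0c: "v0 \<in> carrier_mat l l" using v0 WS_carrier by blast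
  obtain v0' where v0': "v0' \<in> weyl_sub l C S" "v0 * v0' = 1\<^sub>m l" using weyl_inv[OF v0 S] by blast
  have v0'c: "v0' \<in> carrier_mat l l" using v0' WS_carrier by blast
  define u where "u = w * v0"
  have uW: "u \<in> weyl l C" unfolding u_def using w v0 WS_weyl[OF S] WS_mult by blast
  have "min_rep l C S u"
    unfolding min_rep_def
  proof (intro conjI ballI uW)
    fix v assume v: "v \<in> weyl_sub l C S"
    have "u * v = w * (v0 * v)" unfolding u_def using wc v0c v WS_carrier
      by (simp add: assoc_mult_mat[of _ l l _ l _ l])
    moreover have "v0 * v \<in> weyl_sub l C S" using v0 v WS_mult by blast
    ultimately show "wlen l C u \<le> wlen l C (u * v)" using v0min unfolding u_def by simp
  qed
  moreover have "w = u * v0'"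
    unfolding u_def using wc v0c v0'c v0' by (simp add: assoc_mult_mat[of _ l l _ l _ l])
  ultimately show ?thesis using v0' by blast
qed

lemma coset_rep_eq: assumes S: "S \<subseteq> {..<l}" and u: "min_rep l C S u" and v: "v \<in> weyl_sub l C S"
  shows "coset_rep l C S (u * v) = u"
  unfolding coset_rep_def
proof (rule the_equality)
  show "min_rep l C S u \<and> (\<exists>v'\<in>weyl_sub l C S. u * v = u * v')" using u v by blast
next
  fix u' assume "min_rep l C S u' \<and> (\<exists>v'\<in>weyl_sub l C S. u * v = u' * v')"
  then show "u' = u" using coset_unique[OF S u _ v] by metis
qed

lemma coset_part_eq: assumes S: "S \<subseteq> {..<l}" and u: "min_rep l C S u" and v: "v \<in> weyl_sub l C S"
  shows "coset_part l C S (u * v) = v"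
  unfolding coset_part_def coset_rep_eq[OF assms]
proof (rule the_equality)
  show "v \<in> weyl_sub l C S \<and> u * v = u * v" using v by blast
next
  fix v' assume a: "v' \<in> weyl_sub l C S \<and> u * v = u * v'"
  have uW: "u \<in> weyl l C" using u unfolding min_rep_def by blast
  obtain u' where u': "u' \<in> weyl l C" "u' * u = 1\<^sub>m l" using weyl_inv[OF uW] by blast
  show "v' = v"
    using left_cancel[OF u'(2)] uW u' a v WS_carrier by metis
qed

lemma coset_decomp: assumes S: "S \<subseteq> {..<l}" and w: "w \<in> weyl l C"
  shows "min_rep l C S (coset_rep l C S w)" "coset_part l C S w \<in> weyl_sub l C S"
    "w = coset_rep l C S w * coset_part l C S w"
proof -
  obtain u v where uv: "min_rep l C S u" "v \<in> weyl_sub l C S" "w = u * v"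
    using coset_exists[OF assms] by blast
  show "min_rep l C S (coset_rep l C S w)" "coset_part l C S w \<in> weyl_sub l C S"
    "w = coset_rep l C S w * coset_part l C S w"
    using uv coset_rep_eq[OF S uv(1,2)] coset_part_eq[OF S uv(1,2)] by auto
qed

end


definition Qf :: "nat \<Rightarrow> (nat \<Rightarrow> nat \<Rightarrow> real) \<Rightarrow> (nat \<Rightarrow> real) \<Rightarrow> real" where
  "Qf n A x = (\<Sum>i<n. \<Sum>j<n. x i * A i j * x j)"

lemma Qf_cont: "continuous_map (product_topology (\<lambda>_. euclideanreal) {..<n}) euclideanreal (Qf n A)"
  unfolding Qf_def
proof (intro continuous_map_sum continuous_map_real_mult)
  fix i j assume "i \<in> {..<n}" "j \<in> {..<n}"
  then show "continuous_map (product_topology (\<lambda>_. euclideanreal) {..<n}) euclideanreal (\<lambda>x. x i)"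
    "continuous_map (product_topology (\<lambda>_. euclideanreal) {..<n}) euclideanreal (\<lambda>x. x j)"
    using continuous_map_product_projection[of _ "{..<n}" "\<lambda>_. euclideanreal"] by auto
qed auto

lemma Qf_cong: "(\<And>i. i < n \<Longrightarrow> x i = y i) \<Longrightarrow> Qf n A x = Qf n A y"
  unfolding Qf_def by simp

lemma Qf_scale: "Qf n A (\<lambda>i. t * x i) = t^2 * Qf n A x"
  unfolding Qf_def by (simp add: sum_distrib_left power2_eq_square algebra_simps)

lemma exists_absmax: fixes x :: "nat \<Rightarrow> real" assumes "n > 0"
  shows "\<exists>j<n. \<forall>i<n. \<bar>x i\<bar> \<le> \<bar>x j\<bar>"
  using assms
proof (induction n)
  case 0 then show ?case by simp
next
  case (Suc n)
  show ?case
  proof (cases "n = 0")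
    case True then show ?thesis by (intro exI[of _ 0]) auto
  next
    case False
    then obtain j where j: "j < n" "\<forall>i<n. \<bar>x i\<bar> \<le> \<bar>x j\<bar>" using Suc by auto
    show ?thesis
    proof (cases "\<bar>x n\<bar> \<le> \<bar>x j\<bar>")
      case True
      then show ?thesis using j by (intro exI[of _ j]) (auto simp: less_Suc_eq)
    next
      case False
      then show ?thesis using j by (intro exI[of _ n]) (auto simp: less_Suc_eq)
    qed
  qed
qed

lemma Qf_nonneg: assumes pd: "\<forall>x. (\<exists>i<n. x i \<noteq> 0) \<longrightarrow> Qf n A x > 0"
  shows "Qf n A x \<ge> 0"
proof (cases "\<exists>i<n. x i \<noteq> 0")
  case True
  then show ?thesis using pd by (simp add: less_imp_le)
next
  case False
  then show ?thesis unfolding Qf_def by simp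
qed

lemma pd_bound: fixes A :: "nat \<Rightarrow> nat \<Rightarrow> real"
  assumes pd: "\<forall>x. (\<exists>i<n. x i \<noteq> 0) \<longrightarrow> Qf n A x > 0"
  shows "\<exists>c>0. \<forall>x k. k < n \<longrightarrow> Qf n A x \<ge> c * (x k)^2"
proof -
  define K where "K k = (\<Pi>\<^sub>E i\<in>{..<n}. if i = k then {1} else {-1..1::real})" for k
  have mk: "\<exists>m>0. \<forall>y\<in>K k. Qf n A y \<ge> m" if k: "k < n" for k
  proof -
    have "compactin (product_topology (\<lambda>_. euclideanreal) {..<n}) (K k)"
      unfolding K_def by (subst compactin_PiE) auto
    then have "compactin euclideanreal (Qf n A ` K k)"
      by (rule image_compactin[OF _ Qf_cont])
    then have cp: "compact (Qf n A ` K k)" by simp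
    have "(\<lambda>i\<in>{..<n}. if i = k then 1 else 0) \<in> K k" unfolding K_def by auto
    then have "Qf n A ` K k \<noteq> {}" by blast
    then obtain q where q: "q \<in> Qf n A ` K k" "\<forall>t\<in>Qf n A ` K k. q \<le> t"
      using compact_attains_inf[OF cp] by blast
    obtain y where y: "y \<in> K k" "q = Qf n A y" using q by blast
    have "y k \<in> (if k = k then {1} else {-1..1})" using PiE_mem[OF y(1)[unfolded K_def]] k by blast
    then have "y k = 1" by simp
    then have "\<exists>i<n. y i \<noteq> 0" using k by auto
    then have "q > 0" using pd y(2) by blast
    then show ?thesis using q by auto
  qed
  then have "\<forall>k. \<exists>m. k < n \<longrightarrow> m > 0 \<and> (\<forall>y\<in>K k. Qf n A y \<ge> m)" by blast
  from choice[OF this] obtain m where m0: "\<forall>k. k < n \<longrightarrow> m k > 0 \<and> (\<forall>y\<in>K k. Qf n A y \<ge> m k)"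
    by blast
  show ?thesis
  proof (cases "n = 0")
    case True
    then show ?thesis by (intro exI[of _ 1]) auto
  next
    case False
    define c where "c = Min (m ` {..<n})"
    have fin: "finite (m ` {..<n})" "m ` {..<n} \<noteq> {}" using False by auto
    have cpos: "c > 0" unfolding c_def using Min_in[OF fin] m0 by auto
    have cle: "c \<le> m k" if "k < n" for k unfolding c_def using that fin(1) by (intro Min_le) auto
    show ?thesis
    proof (intro exI[of _ c] conjI allI impI cpos)
      fix x :: "nat \<Rightarrow> real" and k assume k: "k < n"
      obtain j where j: "j < n" "\<forall>i<n. \<bar>x i\<bar> \<le> \<bar>x j\<bar>"
        using exists_absmax[of n x] False by auto
      show "Qf n A x \<ge> c * (x k)^2"
      proof (cases "x j = 0")
        case True
        have "\<bar>x k\<bar> \<le> \<bar>x j\<bar>" using j k by blast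
        then have "\<bar>x k\<bar> \<le> 0" using True by simp
        then have "x k = 0" by simp
        then show ?thesis using Qf_nonneg[OF pd] by simp
      next
        case False
        define y where "y = (\<lambda>i\<in>{..<n}. x i / x j)"
        have yK: "y \<in> K j" unfolding K_def
        proof (rule PiE_I)
          fix i assume i: "i \<in> {..<n}"
          have "\<bar>x i\<bar> \<le> \<bar>x j\<bar>" using j i by simp
          then have "\<bar>x i / x j\<bar> \<le> 1" using False by (simp add: abs_divide divide_le_eq_1)
          then have "-1 \<le> x i / x j \<and> x i / x j \<le> 1" by linarith
          then show "y i \<in> (if i = j then {1} else {-1..1})" using i False unfolding y_def
            by auto
        next
          fix i assume "i \<notin> {..<n}" then show "y i = undefined" unfolding y_def by simp
        qed
        have "Qf n A x = Qf n A (\<lambda>i. x j * y i)"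
          by (rule Qf_cong) (use False in \<open>simp add: y_def\<close>)
        also have "\<dots> = (x j)^2 * Qf n A y" by (rule Qf_scale)
        finally have qx: "Qf n A x = (x j)^2 * Qf n A y" .
        have "Qf n A y \<ge> m j" using m0 j(1) yK by blast
        then have qy: "Qf n A y \<ge> c" using cle[OF j(1)] by simp
        have xx: "(x k)^2 \<le> (x j)^2" using j k abs_le_square_iff by blast
        have "c * (x k)^2 \<le> c * (x j)^2" using xx cpos by (simp add: mult_left_mono)
        also have "\<dots> \<le> Qf n A y * (x j)^2" using qy by (simp add: mult_right_mono)
        finally show ?thesis using qx by (simp add: mult.commute)
      qed
    qed
  qed
qed


lemma Qf_shift: "Qf n A (\<lambda>k. x k - t * d k) = Qf n A x
   - t * ((\<Sum>a<n. \<Sum>b<n. d a * A a b * x b) + (\<Sum>a<n. \<Sum>b<n. x a * A a b * d b)) + t^2 * Qf n A d"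
proof -
  have "Qf n A (\<lambda>k. x k - t * d k) = (\<Sum>a<n. \<Sum>b<n. x a * A a b * x b - t * (d a * A a b * x b) - t * (x a * A a b * d b) + t^2 * (d a * A a b * d b))"
    unfolding Qf_def by (intro sum.cong refl) (simp add: algebra_simps power2_eq_square)
  also have "\<dots> = Qf n A x - t * ((\<Sum>a<n. \<Sum>b<n. d a * A a b * x b) + (\<Sum>a<n. \<Sum>b<n. x a * A a b * d b)) + t^2 * Qf n A d"
    unfolding Qf_def by (simp add: sum.distrib sum_subtractf sum_distrib_left algebra_simps)
  finally show ?thesis .
qed

lemma sdl: "i < (n::nat) \<Longrightarrow> (\<Sum>a<n. (if a = i then 1 else 0) * (f a :: real)) = f i"
proof -
  assume "i < n"
  have "(\<Sum>a<n. (if a = i then 1 else 0) * f a) = (\<Sum>a<n. if a = i then f a else 0)" by (intro sum.cong) auto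
  then show ?thesis using \<open>i < n\<close> sum.delta[of "{..<n}" i f] by simp
qed

lemma sdr: "i < (n::nat) \<Longrightarrow> (\<Sum>a<n. (f a :: real) * (if a = i then 1 else 0)) = f i"
  using sdl[of i n f] by (simp add: mult.commute)

context cartan begin

lemma e_exists: obtains e :: "nat \<Rightarrow> real" where "\<forall>i<l. e i > 0"
    "\<forall>i<l. \<forall>j<l. of_int (C i j) * e j = of_int (C j i) * e i"
    "\<forall>x::nat \<Rightarrow> real. (\<exists>i<l. x i \<noteq> 0) \<longrightarrow> Qf l (\<lambda>i j. of_int (C i j) * e j) x > 0"
  using cft unfolding cartan_finite_type_def Qf_def by blast

lemma Qf_act: assumes epos: "\<forall>i<l. e i > 0"
    and esym: "\<forall>i<l. \<forall>j<l. of_int (C i j) * e j = of_int (C j i) * e i" and i: "i < l"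
  shows "Qf l (\<lambda>i j. of_int (C i j) * e j) (\<lambda>k. of_int (act i z k)) = Qf l (\<lambda>i j. of_int (C i j) * e j) (\<lambda>k. of_int (z k))"
proof -
  let ?A = "\<lambda>i j. of_int (C i j) * e j :: real"
  define x where "x = (\<lambda>k. real_of_int (z k))"
  define d where "d = (\<lambda>k. if k = i then 1 else 0 :: real)"
  define t where "t = real_of_int (phi i z)"
  have t2: "t = (\<Sum>b<l. of_int (C b i) * x b)" unfolding t_def phi_def x_def by simp
  have eq: "(\<lambda>k. of_int (act i z k)) = (\<lambda>k. x k - t * d k)"
    unfolding act_def x_def d_def t_def by auto
  have s1: "(\<Sum>a<l. \<Sum>b<l. d a * ?A a b * x b) = e i * t"
  proof -
    have "(\<Sum>a<l. \<Sum>b<l. d a * ?A a b * x b) = (\<Sum>a<l. d a * (\<Sum>b<l. ?A a b * x b))"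
      by (simp add: sum_distrib_left mult.assoc)
    also have "\<dots> = (\<Sum>b<l. ?A i b * x b)"
      unfolding d_def using i by (rule sdl)
    also have "\<dots> = (\<Sum>b<l. e i * (of_int (C b i) * x b))"
      using esym i by (intro sum.cong refl) (simp add: algebra_simps)
    finally show ?thesis unfolding t2 by (simp add: sum_distrib_left)
  qed
  have s2: "(\<Sum>a<l. \<Sum>b<l. x a * ?A a b * d b) = e i * t"
  proof -
    have "(\<Sum>a<l. \<Sum>b<l. x a * ?A a b * d b) = (\<Sum>a<l. x a * ?A a i)"
      unfolding d_def using i by (intro sum.cong refl) (rule sdr)
    also have "\<dots> = (\<Sum>a<l. e i * (of_int (C a i) * x a))"
      by (intro sum.cong refl) (simp add: algebra_simps)
    finally show ?thesis unfolding t2 by (simp add: sum_distrib_left)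
  qed
  have s3: "Qf l ?A d = 2 * e i"
  proof -
    have "Qf l ?A d = (\<Sum>a<l. d a * (\<Sum>b<l. ?A a b * d b))"
      unfolding Qf_def by (simp add: sum_distrib_left mult.assoc)
    also have "\<dots> = (\<Sum>b<l. ?A i b * d b)" unfolding d_def using i by (rule sdl)
    also have "\<dots> = ?A i i" unfolding d_def using i by (rule sdr)
    finally show ?thesis using Cdiag i by simp
  qed
  show ?thesis unfolding eq Qf_shift s1 s2 s3 x_def[symmetric]
    by (simp add: power2_eq_square algebra_simps)
qed

lemma weyl_finite: "finite (weyl l C)"
proof -
  obtain e :: "nat \<Rightarrow> real" where epos: "\<forall>i<l. e i > 0"
    and esym: "\<forall>i<l. \<forall>j<l. of_int (C i j) * e j = of_int (C j i) * e i"
    and pd: "\<forall>x::nat \<Rightarrow> real. (\<exists>i<l. x i \<noteq> 0) \<longrightarrow> Qf l (\<lambda>i j. of_int (C i j) * e j) x > 0"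
    using e_exists by blast
  let ?A = "\<lambda>i j. of_int (C i j) * e j :: real"
  obtain c where c: "c > 0" "\<forall>x k. k < l \<longrightarrow> Qf l ?A x \<ge> c * (x k)^2"
    using pd_bound[OF pd] by blast
  define M where "M = (\<Sum>j<l. 2 * e j / c)"
  define N where "N = \<lceil>M\<rceil> + 1"
  have wq: "Qf l ?A (\<lambda>k. of_int (wact ws (dl j) k)) = 2 * e j" if "set ws \<subseteq> {..<l}" "j < l" for ws j
    using that(1)
  proof (induction ws)
    case Nil
    have "Qf l ?A (\<lambda>k. of_int (dl j k)) = (\<Sum>a<l. (if a = j then 1 else 0) * (\<Sum>b<l. ?A a b * (if b = j then 1 else 0)))"
      unfolding Qf_def dl_def by (simp add: sum_distrib_left mult.assoc if_distrib cong: if_cong)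
    also have "\<dots> = (\<Sum>b<l. ?A j b * (if b = j then 1 else 0))" using that(2) by (rule sdl)
    also have "\<dots> = ?A j j" using that(2) by (rule sdr)
    finally show ?case using Cdiag that(2) by simp
  next
    case (Cons i ws)
    then show ?case using Qf_act[OF epos esym, of i] by simp
  qed
  have bound: "\<bar>w $$ (k, j)\<bar> \<le> N" if w: "w \<in> weyl l C" and k: "k < l" and j: "j < l" for w k j
  proof -
    obtain ws where ws: "set ws \<subseteq> {..<l}" "word_prod l C ws = w" using w weyl_subE by blast
    have "Qf l ?A (\<lambda>k. of_int (w $$ (k, j))) = Qf l ?A (\<lambda>k. of_int (wact ws (dl j) k))"
      by (rule Qf_cong) (use ws j word_prod_col in auto)
    also have "\<dots> = 2 * e j" using wq ws j by blast
    finally have "c * (of_int (w $$ (k, j)))^2 \<le> 2 * e j"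
      using c(2)[rule_format, of k "\<lambda>k. real_of_int (w $$ (k, j))"] k by simp
    then have "(of_int (w $$ (k, j)))^2 \<le> 2 * e j / c" using c by (simp add: field_simps)
    also have "\<dots> \<le> M" unfolding M_def using j epos c
      by (intro member_le_sum) (auto intro!: divide_nonneg_pos less_imp_le)
    finally have sq: "(real_of_int (w $$ (k, j)))^2 \<le> M" .
    show ?thesis
    proof (cases "\<bar>w $$ (k, j)\<bar> \<le> 1")
      case True
      have "M \<ge> 0" using sq zero_le_power2[of "real_of_int (w $$ (k, j))"] by linarith
      then show ?thesis using True unfolding N_def by linarith
    next
      case False
      define r where "r = real_of_int \<bar>w $$ (k, j)\<bar>"
      have r1: "r \<ge> 1" using False unfolding r_def by simp
      have "r * 1 \<le> r * r" using r1 by (intro mult_left_mono) auto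
      moreover have "r * r = (real_of_int (w $$ (k, j)))^2" unfolding r_def
        by (simp add: power2_eq_square)
      ultimately have "real_of_int \<bar>w $$ (k, j)\<bar> \<le> (real_of_int (w $$ (k, j)))^2" unfolding r_def by simp
      then have "real_of_int \<bar>w $$ (k, j)\<bar> \<le> M" using sq by linarith
      then show ?thesis unfolding N_def by linarith
    qed
  qed
  have "weyl l C \<subseteq> (\<lambda>f. mat l l f) ` (\<Pi>\<^sub>E p\<in>{..<l} \<times> {..<l}. {-N..N})"
  proof
    fix w assume w: "w \<in> weyl l C"
    have wc: "w \<in> carrier_mat l l" using w WS_carrier by blast
    define f where "f = (\<lambda>p\<in>{..<l} \<times> {..<l}. w $$ p)"
    have "f \<in> (\<Pi>\<^sub>E p\<in>{..<l} \<times> {..<l}. {-N..N})"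
    proof -
      have "w $$ p \<in> {-N..N}" if pin: "p \<in> {..<l} \<times> {..<l}" for p
      proof -
        obtain a b where p: "p = (a, b)" "a < l" "b < l" using pin by (cases p) auto
        have "\<bar>w $$ (a, b)\<bar> \<le> N" using bound[OF w p(2,3)] .
        then have "w $$ (a, b) \<le> N" "- N \<le> w $$ (a, b)" by linarith+
        then show ?thesis using p by simp
      qed
      then show ?thesis unfolding f_def by auto
    qed
    moreover have "mat l l f = w"
      by (rule eq_matI) (use wc in \<open>auto simp: f_def\<close>)
    ultimately show "w \<in> (\<lambda>f. mat l l f) ` (\<Pi>\<^sub>E p\<in>{..<l} \<times> {..<l}. {-N..N})" by force
  qed
  moreover have "finite ((\<lambda>f. mat l l f) ` (\<Pi>\<^sub>E p\<in>{..<l} \<times> {..<l}. {-N..N}))"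
    by (intro finite_imageI finite_PiE) auto
  ultimately show ?thesis by (rule finite_subset)
qed

end


definition pm1 :: "int \<Rightarrow> bool" where "pm1 x \<longleftrightarrow> x = 1 \<or> x = -1"

definition par :: "int \<Rightarrow> int \<Rightarrow> int" where "par \<eta> a = (if even a then 1 else \<eta>)"

lemma par_pow: "pm1 \<eta> \<Longrightarrow> \<eta> ^ nat \<bar>a\<bar> = par \<eta> a"
  unfolding pm1_def par_def by (auto simp: even_nat_iff)

lemma par_pm1: "pm1 \<eta> \<Longrightarrow> pm1 (par \<eta> a)"
  unfolding pm1_def par_def by auto

lemma par_diff: "pm1 \<eta> \<Longrightarrow> par \<eta> (a - b) = par \<eta> a * par \<eta> b"
  unfolding pm1_def par_def by auto

lemma par_add: "pm1 \<eta> \<Longrightarrow> par \<eta> (a + b) = par \<eta> a * par \<eta> b"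
  unfolding pm1_def par_def by auto

lemma par_mult: "par \<eta> (a * c) = (if even c then 1 else par \<eta> a)"
  unfolding par_def by auto

lemma par_zero[simp]: "par \<eta> 0 = 1" unfolding par_def by simp
lemma par_one[simp]: "par \<eta> 1 = \<eta>" unfolding par_def by simp

lemma pm1_mult: "pm1 a \<Longrightarrow> pm1 b \<Longrightarrow> pm1 (a * b)" unfolding pm1_def by auto

lemma pm1_prod: "(\<And>k. k \<in> A \<Longrightarrow> pm1 (f k)) \<Longrightarrow> pm1 (\<Prod>k\<in>A. f k)"
proof (induction A rule: infinite_finite_induct)
  case (infinite A) then show ?case by (simp add: pm1_def)
next
  case empty then show ?case by (simp add: pm1_def)
next
  case (insert x F) then show ?case by (simp add: pm1_mult)
qed

lemma pm1_pow: "pm1 a \<Longrightarrow> pm1 (a ^ n)"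
  by (induction n) (auto simp: pm1_mult, simp add: pm1_def)

lemma prod_par_mult: "(\<Prod>k\<in>A. par (\<eta> k) (a k * c)) = par (\<Prod>k\<in>A. par (\<eta> k) (a k)) c"
  unfolding par_mult by (simp add: par_def)

lemma dset_pm1: "\<eta> \<in> dset S \<Longrightarrow> k \<in> S \<Longrightarrow> pm1 (\<eta> k)"
  unfolding dset_def pm1_def by auto

lemma dset_ext: "\<eta> \<in> dset S \<Longrightarrow> k \<notin> S \<Longrightarrow> \<eta> k = undefined"
  unfolding dset_def by auto

lemma dsetI: "(\<And>k. k \<in> S \<Longrightarrow> pm1 (\<eta> k)) \<Longrightarrow> (\<And>k. k \<notin> S \<Longrightarrow> \<eta> k = undefined) \<Longrightarrow> \<eta> \<in> dset S"
  unfolding dset_def pm1_def by auto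

context cartan begin

definition CFs :: "nat set \<Rightarrow> (nat \<Rightarrow> int) \<Rightarrow> int mat \<Rightarrow> int" where
  "CFs S \<eta> M = (\<Prod>k\<in>S. par (\<eta> k) (\<Sum>m\<in>{..<l} - S. M $$ (k, m)))"

definition CFf :: "nat set \<Rightarrow> (nat \<Rightarrow> int) \<Rightarrow> int mat \<Rightarrow> (nat \<Rightarrow> int)" where
  "CFf S \<eta> M = (\<lambda>j. if j \<in> S then (\<Prod>k\<in>S. par (\<eta> k) (M $$ (k, j))) else undefined)"

lemma CFf_dset: "\<eta> \<in> dset S \<Longrightarrow> CFf S \<eta> M \<in> dset S"
  unfolding CFf_def by (rule dsetI) (auto intro!: pm1_prod par_pm1 dset_pm1)

lemma CFs_pm1: "\<eta> \<in> dset S \<Longrightarrow> pm1 (CFs S \<eta> M)"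
  unfolding CFs_def by (auto intro!: pm1_prod par_pm1 dset_pm1)

lemma rcount_par: assumes "S \<subseteq> {..<l}"
  shows "even (rcount l C S i) \<longleftrightarrow> even (\<Sum>m\<in>{..<l} - S. C m i)"
  unfolding rcount_def using even_sum_iff[of "{..<l} - S" "\<lambda>m. C m i"] by simp

lemma word_act_closed: assumes S: "S \<subseteq> {..<l}" and ws: "set ws \<subseteq> S" and eta: "\<eta> \<in> dset S"
  shows "word_act l C S ws \<eta> = (CFs S \<eta> (word_prod l C (rev ws)), CFf S \<eta> (word_prod l C (rev ws)))"
  using ws
proof (induction ws)
  case Nil
  have "CFs S \<eta> (1\<^sub>m l) = 1"
    unfolding CFs_def
  proof (rule prod.neutral, rule ballI)
    fix k assume k: "k \<in> S"
    have "(\<Sum>m\<in>{..<l} - S. (1\<^sub>m l :: int mat) $$ (k, m)) = 0"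
      using k S by (intro sum.neutral) auto
    then show "par (\<eta> k) (\<Sum>m\<in>{..<l} - S. 1\<^sub>m l $$ (k, m)) = 1" by (simp only: par_zero)
  qed
  moreover have "CFf S \<eta> (1\<^sub>m l) = \<eta>"
  proof
    fix j show "CFf S \<eta> (1\<^sub>m l) j = \<eta> j"
    proof (cases "j \<in> S")
      case True
      have "(\<Prod>k\<in>S. par (\<eta> k) ((1\<^sub>m l :: int mat) $$ (k, j))) = (\<Prod>k\<in>S. if k = j then \<eta> k else 1)"
        using True S by (intro prod.cong) (auto simp: par_def subset_iff)
      also have "\<dots> = \<eta> j" using True S by (simp add: finite_subset)
      finally show ?thesis unfolding CFf_def using True by simp
    next
      case False
      then show ?thesis unfolding CFf_def using dset_ext[OF eta] by simp
    qed
  qed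
  ultimately show ?case unfolding word_act_def by simp
next
  case (Cons i ws)
  have iS: "i \<in> S" and wsS: "set ws \<subseteq> S" using Cons.prems by auto
  have il: "i < l" using iS S by auto
  define M where "M = word_prod l C (rev ws)"
  have Mc: "M \<in> carrier_mat l l" unfolding M_def by simp
  have M': "word_prod l C (rev (i # ws)) = M * srefl l C i" unfolding M_def by (simp add: word_prod_append)
  have ent: "(M * srefl l C i) $$ (k, j) = M $$ (k, j) - M $$ (k, i) * C j i" if "k < l" "j < l" for k j
    using mult_srefl_index[OF Mc that il] .
  have IH: "word_act l C S ws \<eta> = (CFs S \<eta> M, CFf S \<eta> M)" using Cons wsS M_def by simp
  have wa: "word_act l C S (i # ws) \<eta> = sact l C S i (word_act l C S ws \<eta>)"
    unfolding word_act_def by simp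
  have pmk: "pm1 (\<eta> k)" if "k \<in> S" for k using dset_pm1[OF eta that] .
  define P where "P = (\<Prod>k\<in>S. par (\<eta> k) (M $$ (k, i)))"
  have Pp: "pm1 P" unfolding P_def by (auto intro!: pm1_prod par_pm1 pmk)
  have fi: "CFf S \<eta> M i = P" unfolding CFf_def P_def using iS by simp
  define R where "R = (\<Sum>m\<in>{..<l} - S. C m i)"
  have s1: "CFs S \<eta> (M * srefl l C i) = CFs S \<eta> M * par P R"
  proof -
    have "CFs S \<eta> (M * srefl l C i) = (\<Prod>k\<in>S. par (\<eta> k) ((\<Sum>m\<in>{..<l} - S. M $$ (k, m)) - M $$ (k, i) * R))"
      unfolding CFs_def R_def
    proof (intro prod.cong refl arg_cong[where f="par _"])
      fix k assume k: "k \<in> S"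
      have "(\<Sum>m\<in>{..<l} - S. (M * srefl l C i) $$ (k, m)) = (\<Sum>m\<in>{..<l} - S. M $$ (k, m) - M $$ (k, i) * C m i)"
        using k S ent by (intro sum.cong) auto
      also have "\<dots> = (\<Sum>m\<in>{..<l} - S. M $$ (k, m)) - M $$ (k, i) * (\<Sum>m\<in>{..<l} - S. C m i)"
        by (simp add: sum_subtractf sum_distrib_left)
      finally show "(\<Sum>m\<in>{..<l} - S. (M * srefl l C i) $$ (k, m)) = (\<Sum>m\<in>{..<l} - S. M $$ (k, m)) - M $$ (k, i) * (\<Sum>m\<in>{..<l} - S. C m i)" .
    qed
    also have "\<dots> = (\<Prod>k\<in>S. par (\<eta> k) (\<Sum>m\<in>{..<l} - S. M $$ (k, m)) * par (\<eta> k) (M $$ (k, i) * R))"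
      by (intro prod.cong refl) (simp add: par_diff pmk)
    also have "\<dots> = CFs S \<eta> M * par P R"
      unfolding CFs_def P_def prod.distrib prod_par_mult ..
    finally show ?thesis .
  qed
  have s2: "P ^ rcount l C S i = par P R"
    using Pp rcount_par[OF S, of i] unfolding R_def pm1_def par_def by auto
  have f1: "CFf S \<eta> (M * srefl l C i) = sfun C S i (CFf S \<eta> M)"
  proof
    fix j show "CFf S \<eta> (M * srefl l C i) j = sfun C S i (CFf S \<eta> M) j"
    proof (cases "j \<in> S")
      case False
      then show ?thesis unfolding CFf_def sfun_def by simp
    next
      case True
      have jl: "j < l" using True S by auto
      have "CFf S \<eta> (M * srefl l C i) j = (\<Prod>k\<in>S. par (\<eta> k) (M $$ (k, j) - M $$ (k, i) * C j i))"
        unfolding CFf_def using True S ent jl by (auto intro!: prod.cong)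
      also have "\<dots> = (\<Prod>k\<in>S. par (\<eta> k) (M $$ (k, j)) * par (\<eta> k) (M $$ (k, i) * C j i))"
        by (intro prod.cong refl) (simp add: par_diff pmk)
      also have "\<dots> = CFf S \<eta> M j * par P (C j i)"
        unfolding CFf_def P_def prod.distrib prod_par_mult using True by simp
      also have "\<dots> = sfun C S i (CFf S \<eta> M) j"
        unfolding sfun_def fi using True par_pow[OF Pp] by simp
      finally show ?thesis .
    qed
  qed
  show ?case
    unfolding wa IH M' sact_def using s1 s2 f1 fi by simp
qed

lemma word_prod_rev_eq: assumes "set xs \<subseteq> {..<l}" "set ys \<subseteq> {..<l}" "word_prod l C xs = word_prod l C ys"
  shows "word_prod l C (rev xs) = word_prod l C (rev ys)"
proof -
  let ?R = "word_prod l C (rev xs)" and ?R' = "word_prod l C (rev ys)" and ?P = "word_prod l C xs"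
  have "?R = ?R * (?P * ?R')" using word_prod_rev[OF assms(2)] assms(3) by simp
  also have "\<dots> = (?R * ?P) * ?R'" by (simp add: assoc_mult_mat[of _ l l _ l _ l])
  also have "\<dots> = ?R'" using word_prod_rev'[OF assms(1)] by (simp add: left_mult_one_mat[of _ l l])
  finally show ?thesis .
qed

lemma word_act_indep: assumes S: "S \<subseteq> {..<l}" and "set xs \<subseteq> S" "set ys \<subseteq> S" "\<eta> \<in> dset S"
  "word_prod l C xs = word_prod l C ys"
  shows "word_act l C S xs \<eta> = word_act l C S ys \<eta>"
  using word_act_closed[OF S assms(2,4)] word_act_closed[OF S assms(3,4)]
    word_prod_rev_eq[of xs ys] assms by auto

lemma wsact_word: assumes S: "S \<subseteq> {..<l}" and ws: "set ws \<subseteq> S" and eta: "\<eta> \<in> dset S"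
  shows "wsact l C S (word_prod l C ws) \<eta> = word_act l C S ws \<eta>"
proof -
  let ?P = "\<lambda>ws'. set ws' \<subseteq> S \<and> word_prod l C ws' = word_prod l C ws"
  have "?P (SOME ws'. ?P ws')" using someI[of ?P ws] ws by blast
  then show ?thesis unfolding wsact_def using word_act_indep[OF S _ ws eta] by blast
qed

lemma foldr_sact: "foldr (sact l C S) ps (e, \<eta>) = (e * fst (word_act l C S ps \<eta>), snd (word_act l C S ps \<eta>))"
  unfolding word_act_def
  by (induction ps) (auto simp: sact_def split: prod.splits)

lemma word_act_dset: assumes S: "S \<subseteq> {..<l}" and ws: "set ws \<subseteq> S" and eta: "\<eta> \<in> dset S"
  shows "snd (word_act l C S ws \<eta>) \<in> dset S" "pm1 (fst (word_act l C S ws \<eta>))"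
  using word_act_closed[OF assms] CFf_dset[OF eta] CFs_pm1[OF eta] by auto

lemma wsact_mult: assumes S: "S \<subseteq> {..<l}" and p: "p \<in> weyl_sub l C S" and v: "v \<in> weyl_sub l C S"
  and eta: "\<eta> \<in> dset S"
  shows "wsact l C S (p * v) \<eta> = (fst (wsact l C S v \<eta>) * fst (wsact l C S p (snd (wsact l C S v \<eta>))),
            snd (wsact l C S p (snd (wsact l C S v \<eta>))))"
proof -
  obtain ps where ps: "set ps \<subseteq> S" "word_prod l C ps = p" using p weyl_subE by blast
  obtain vs where vs: "set vs \<subseteq> S" "word_prod l C vs = v" using v weyl_subE by blast
  have d: "snd (word_act l C S vs \<eta>) \<in> dset S" using word_act_dset[OF S vs(1) eta] by blast
  have "wsact l C S (p * v) \<eta> = word_act l C S (ps @ vs) \<eta>"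
    using wsact_word[OF S _ eta, of "ps @ vs"] ps vs by (simp add: word_prod_append)
  also have "\<dots> = foldr (sact l C S) ps (word_act l C S vs \<eta>)"
    unfolding word_act_def by simp
  also have "\<dots> = foldr (sact l C S) ps (fst (word_act l C S vs \<eta>), snd (word_act l C S vs \<eta>))" by simp
  also have "\<dots> = (fst (word_act l C S vs \<eta>) * fst (word_act l C S ps (snd (word_act l C S vs \<eta>))),
            snd (word_act l C S ps (snd (word_act l C S vs \<eta>))))"
    by (rule foldr_sact)
  finally show ?thesis
    using wsact_word[OF S vs(1) eta] wsact_word[OF S ps(1) d] ps vs by simp
qed

lemma wsact_dset: assumes S: "S \<subseteq> {..<l}" and v: "v \<in> weyl_sub l C S" and eta: "\<eta> \<in> dset S"
  shows "snd (wsact l C S v \<eta>) \<in> dset S" "pm1 (fst (wsact l C S v \<eta>))"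
proof -
  obtain vs where vs: "set vs \<subseteq> S" "word_prod l C vs = v" using v weyl_subE by blast
  show "snd (wsact l C S v \<eta>) \<in> dset S" "pm1 (fst (wsact l C S v \<eta>))"
    using wsact_word[OF S vs(1) eta] word_act_dset[OF S vs(1) eta] vs by auto
qed

lemma wsact_one: assumes S: "S \<subseteq> {..<l}" and eta: "\<eta> \<in> dset S"
  shows "wsact l C S (1\<^sub>m l) \<eta> = (1, \<eta>)"
  using wsact_word[OF S _ eta, of "[]"] by (simp add: word_act_def)

end


definition fsupp :: "('a \<Rightarrow> int) \<Rightarrow> bool" where
  "fsupp f \<longleftrightarrow> finite {x. f x \<noteq> 0}"

definition delta :: "'a \<Rightarrow> int \<Rightarrow> 'a \<Rightarrow> int" where
  "delta x e = (\<lambda>y. if y = x then e else 0)"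

lemma fsupp_delta[simp]: "fsupp (delta x e)"
  unfolding fsupp_def delta_def by (rule finite_subset[of _ "{x}"]) auto

lemma fsupp_zero[simp]: "fsupp (\<lambda>_. 0)" unfolding fsupp_def by simp

lemma fsupp_lin: "fsupp f \<Longrightarrow> fsupp g \<Longrightarrow> fsupp (\<lambda>x. a * f x + b * g x)"
  unfolding fsupp_def by (rule finite_subset[of _ "{x. f x \<noteq> 0} \<union> {x. g x \<noteq> 0}"]) auto

lemma fsupp_scale: "fsupp f \<Longrightarrow> fsupp (\<lambda>x. a * f x)"
  unfolding fsupp_def by (rule finite_subset[of _ "{x. f x \<noteq> 0}"]) auto

lemma fsupp_sum: "finite I \<Longrightarrow> (\<And>i. i \<in> I \<Longrightarrow> fsupp (h i)) \<Longrightarrow> fsupp (\<lambda>x. \<Sum>i\<in>I. h i x)"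
proof (induction I rule: finite_induct)
  case empty then show ?case by simp
next
  case (insert i I)
  have "fsupp (\<lambda>x. 1 * h i x + 1 * (\<Sum>i\<in>I. h i x))"
    using insert by (intro fsupp_lin) auto
  then show ?case using insert by simp
qed

lemma linext_eq: assumes "finite A" "{x. f x \<noteq> 0} \<subseteq> A"
  shows "linext F f y = (\<Sum>x\<in>A. f x * F x y)"
  unfolding linext_def using assms by (intro sum.mono_neutral_left) auto

lemma linext_lin: assumes "fsupp f" "fsupp g"
  shows "linext F (\<lambda>x. a * f x + b * g x) = (\<lambda>y. a * linext F f y + b * linext F g y)"
proof
  fix y
  let ?A = "{x. f x \<noteq> 0} \<union> {x. g x \<noteq> 0}"
  have fin: "finite ?A" using assms unfolding fsupp_def by auto
  have "linext F (\<lambda>x. a * f x + b * g x) y = (\<Sum>x\<in>?A. (a * f x + b * g x) * F x y)"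
    by (rule linext_eq[OF fin]) auto
  also have "\<dots> = a * (\<Sum>x\<in>?A. f x * F x y) + b * (\<Sum>x\<in>?A. g x * F x y)"
    by (simp add: sum.distrib sum_distrib_left algebra_simps)
  also have "\<dots> = a * linext F f y + b * linext F g y"
    using linext_eq[OF fin, of f F y] linext_eq[OF fin, of g F y] by auto
  finally show "linext F (\<lambda>x. a * f x + b * g x) y = a * linext F f y + b * linext F g y" .
qed

lemma linext_scale: assumes "fsupp f"
  shows "linext F (\<lambda>x. a * f x) = (\<lambda>y. a * linext F f y)"
  using linext_lin[OF assms fsupp_zero, of F a 0] by simp

lemma linext_delta: "linext F (delta x e) = (\<lambda>y. e * F x y)"
proof
  fix y
  have "linext F (delta x e) y = (\<Sum>z\<in>{x}. delta x e z * F z y)"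
    by (rule linext_eq) (auto simp: delta_def)
  then show "linext F (delta x e) y = e * F x y" by (simp add: delta_def)
qed

lemma linext_sum: "finite I \<Longrightarrow> (\<And>i. i \<in> I \<Longrightarrow> fsupp (h i)) \<Longrightarrow>
  linext F (\<lambda>x. \<Sum>i\<in>I. h i x) = (\<lambda>y. \<Sum>i\<in>I. linext F (h i) y)"
proof (induction I rule: finite_induct)
  case empty
  then show ?case unfolding linext_def by simp
next
  case (insert i I)
  have fs: "fsupp (\<lambda>x. \<Sum>i\<in>I. h i x)" using insert by (intro fsupp_sum) auto
  have "linext F (\<lambda>x. \<Sum>i\<in>insert i I. h i x) = linext F (\<lambda>x. 1 * h i x + 1 * (\<Sum>i\<in>I. h i x))"
    using insert by simp
  also have "\<dots> = (\<lambda>y. 1 * linext F (h i) y + 1 * linext F (\<lambda>x. \<Sum>i\<in>I. h i x) y)"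
    using insert fs by (intro linext_lin) auto
  finally show ?case using insert by simp
qed

lemma linext_fsupp: assumes "fsupp f" "\<And>x. f x \<noteq> 0 \<Longrightarrow> fsupp (F x)"
  shows "fsupp (linext F f)"
proof -
  have fin: "finite {x. f x \<noteq> 0}" using assms unfolding fsupp_def by simp
  have "fsupp (\<lambda>y. \<Sum>x\<in>{x. f x \<noteq> 0}. f x * F x y)"
    using fin assms by (intro fsupp_sum fsupp_scale) auto
  then show ?thesis unfolding linext_def .
qed

lemma linext_as_sum: assumes "fsupp f"
  shows "linext F f = (\<lambda>y. \<Sum>x\<in>{x. f x \<noteq> 0}. f x * F x y)"
  unfolding linext_def ..

definition pos :: "nat set \<Rightarrow> nat \<Rightarrow> nat" where
  "pos T a = card {m \<in> T. m < a}"

lemma pos_nth: assumes "finite T" "j < length (sorted_list_of_set T)"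
  shows "pos T (sorted_list_of_set T ! j) = j"
proof -
  let ?cs = "sorted_list_of_set T"
  have st: "sorted_wrt (<) ?cs" by (rule strict_sorted_list_of_set)
  have ds: "distinct ?cs" by simp
  have set: "set ?cs = T" using assms by simp
  have "{m \<in> T. m < ?cs ! j} = (nth ?cs) ` {..<j}"
  proof
    show "{m \<in> T. m < ?cs ! j} \<subseteq> (nth ?cs) ` {..<j}"
    proof
      fix m assume m: "m \<in> {m \<in> T. m < ?cs ! j}"
      then have "m \<in> set ?cs" using set by auto
      then obtain i where i: "i < length ?cs" "?cs ! i = m" by (auto simp: in_set_conv_nth)
      have "i < j"
      proof (rule ccontr)
        assume "\<not> i < j"
        then have "j = i \<or> j < i" by auto
        then have "?cs ! j \<le> ?cs ! i" using sorted_wrt_nth_less[OF st, of j i] i by auto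
        then show False using m i by auto
      qed
      then show "m \<in> (nth ?cs) ` {..<j}" using i by auto
    qed
  next
    show "(nth ?cs) ` {..<j} \<subseteq> {m \<in> T. m < ?cs ! j}"
    proof
      fix m assume "m \<in> (nth ?cs) ` {..<j}"
      then obtain i where i: "i < j" "m = ?cs ! i" by auto
      have "m \<in> set ?cs" using i assms(2) by auto
      moreover have "m < ?cs ! j" using sorted_wrt_nth_less[OF st i(1) assms(2)] i by simp
      ultimately show "m \<in> {m \<in> T. m < ?cs ! j}" using set by simp
    qed
  qed
  moreover have "card ((nth ?cs) ` {..<j}) = j"
    using assms(2) ds by (subst card_image) (auto intro!: inj_on_nth)
  ultimately show ?thesis unfolding pos_def by simp
qed

lemma sum_sorted_reindex: assumes "finite T"
  shows "(\<Sum>j<length (sorted_list_of_set T). g (sorted_list_of_set T ! j) j) = (\<Sum>a\<in>T. g a (pos T a))"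
proof -
  let ?cs = "sorted_list_of_set T"
  have bij: "bij_betw (nth ?cs) {..<length ?cs} T"
    using assms by (intro bij_betw_nth) auto
  have "(\<Sum>j<length ?cs. g (?cs ! j) j) = (\<Sum>j<length ?cs. g (?cs ! j) (pos T (?cs ! j)))"
    using pos_nth[OF assms] by (intro sum.cong) auto
  also have "\<dots> = (\<Sum>a\<in>T. g a (pos T a))"
    using sum.reindex_bij_betw[OF bij, of "\<lambda>a. g a (pos T a)"] by simp
  finally show ?thesis .
qed

lemma pos_remove_less: assumes "finite T" "a \<in> T" "b \<in> T" "a < b"
  shows "pos (T - {a}) b = pos T b - 1" "pos T b \<ge> 1"
proof -
  have "{m \<in> T - {a}. m < b} = {m \<in> T. m < b} - {a}" by auto
  moreover have "a \<in> {m \<in> T. m < b}" using assms by auto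
  moreover have "finite {m \<in> T. m < b}" using assms by auto
  ultimately show "pos (T - {a}) b = pos T b - 1" unfolding pos_def by (simp add: card_Diff_singleton)
  have "card {m \<in> T. m < b} > 0" using assms by (subst card_gt_0_iff) auto
  then show "pos T b \<ge> 1" unfolding pos_def by simp
qed

lemma pos_remove_greater: assumes "b < a"
  shows "pos (T - {a}) b = pos T b"
proof -
  have "{m \<in> T - {a}. m < b} = {m \<in> T. m < b}" using assms by auto
  then show ?thesis unfolding pos_def by simp
qed

lemma sign_swap: assumes "finite T" "a \<in> T" "b \<in> T" "a \<noteq> b"
  shows "(-1::int) ^ (pos T b + pos (T - {b}) a) = - ((-1) ^ (pos T a + pos (T - {a}) b))"
proof (cases "a < b")
  case True
  have "pos (T - {a}) b = pos T b - 1" "pos T b \<ge> 1" using pos_remove_less[OF assms(1-3) True] by auto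
  moreover have "pos (T - {b}) a = pos T a" using pos_remove_greater[OF True] .
  ultimately have "pos T b + pos (T - {b}) a = Suc (pos T a + pos (T - {a}) b)" by simp
  then show ?thesis by simp
next
  case False
  then have ba: "b < a" using assms by auto
  have "pos (T - {b}) a = pos T a - 1" "pos T a \<ge> 1" using pos_remove_less[OF assms(1) assms(3) assms(2) ba] by auto
  moreover have "pos (T - {a}) b = pos T b" using pos_remove_greater[OF ba] .
  ultimately have "pos T a + pos (T - {a}) b = Suc (pos T b + pos (T - {b}) a)" by simp
  then show ?thesis by simp
qed

lemma antisym_sum: assumes "finite T" "\<And>a b. a \<in> T \<Longrightarrow> b \<in> T \<Longrightarrow> a \<noteq> b \<Longrightarrow> H b a = - H a b"
  shows "(\<Sum>a\<in>T. \<Sum>b\<in>T - {a}. H a b) = (0::int)"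
proof -
  let ?P = "{p \<in> T \<times> T. fst p \<noteq> snd p}"
  have finP: "finite ?P" using assms by auto
  have e1: "(\<Sum>a\<in>T. \<Sum>b\<in>T - {a}. H a b) = (\<Sum>p\<in>?P. H (fst p) (snd p))"
  proof -
    have "(\<Sum>a\<in>T. \<Sum>b\<in>T - {a}. H a b) = (\<Sum>p\<in>(SIGMA a:T. T - {a}). H (fst p) (snd p))"
      using assms(1) by (subst sum.Sigma) (auto simp: split_beta)
    moreover have "(SIGMA a:T. T - {a}) = ?P" by auto
    ultimately show ?thesis by simp
  qed
  have bij: "bij_betw (\<lambda>p. (snd p, fst p)) ?P ?P"
    by (rule bij_betwI[where g="\<lambda>p. (snd p, fst p)"]) auto
  have "(\<Sum>p\<in>?P. H (fst p) (snd p)) = (\<Sum>p\<in>?P. H (snd p) (fst p))"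
    using sum.reindex_bij_betw[OF bij, of "\<lambda>p. H (fst p) (snd p)"] by simp
  also have "\<dots> = (\<Sum>p\<in>?P. - H (fst p) (snd p))"
  proof (rule sum.cong[OF refl])
    fix p assume p: "p \<in> ?P"
    then have "fst p \<in> T" "snd p \<in> T" "fst p \<noteq> snd p" by auto
    then show "H (snd p) (fst p) = - H (fst p) (snd p)" by (rule assms(2))
  qed
  also have "\<dots> = - (\<Sum>p\<in>?P. H (fst p) (snd p))"
    by (rule sum_negf)
  finally show ?thesis using e1 by simp
qed


lemma dset_upd: "\<eta> \<in> dset S \<Longrightarrow> a \<notin> S \<Longrightarrow> pm1 \<epsilon> \<Longrightarrow> \<eta>(a := \<epsilon>) \<in> dset (insert a S)"
  by (rule dsetI) (auto simp: dset_pm1 dset_ext)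

lemma delta_scale: "delta x (a * b) y = a * delta x b y"
  unfolding delta_def by simp

context cartan begin

lemma tens_delta: "tens l C S w \<eta> = delta (S, coset_rep l C S w, snd (wsact l C S (coset_part l C S w) \<eta>))
    (fst (wsact l C S (coset_part l C S w) \<eta>))"
  unfolding tens_def delta_def prod.case_eq_if by simp

lemma tens_mult: assumes S: "S \<subseteq> {..<l}" and w: "w \<in> weyl l C" and v: "v \<in> weyl_sub l C S"
  and eta: "\<eta> \<in> dset S"
  shows "tens l C S (w * v) \<eta> = (\<lambda>y. fst (wsact l C S v \<eta>) * tens l C S w (snd (wsact l C S v \<eta>)) y)"
proof -
  define u where "u = coset_rep l C S w"
  define p where "p = coset_part l C S w"
  have u: "min_rep l C S u" and p: "p \<in> weyl_sub l C S" and wup: "w = u * p"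
    using coset_decomp[OF S w] unfolding u_def p_def by auto
  have uc: "u \<in> carrier_mat l l" using u unfolding min_rep_def using WS_carrier by blast
  have pc: "p \<in> carrier_mat l l" and vc: "v \<in> carrier_mat l l" using p v WS_carrier by auto
  have pv: "p * v \<in> weyl_sub l C S" using p v WS_mult by blast
  have wv: "w * v = u * (p * v)" unfolding wup using uc pc vc by (rule assoc_mult_mat)
  have cr: "coset_rep l C S (w * v) = u" using coset_rep_eq[OF S u pv] wv by simp
  have cp: "coset_part l C S (w * v) = p * v" using coset_part_eq[OF S u pv] wv by simp
  have ws: "wsact l C S (p * v) \<eta> = (fst (wsact l C S v \<eta>) * fst (wsact l C S p (snd (wsact l C S v \<eta>))),
            snd (wsact l C S p (snd (wsact l C S v \<eta>))))"
    by (rule wsact_mult[OF S p v eta])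
  show ?thesis
    unfolding tens_delta[of S "w * v"] tens_delta[of S w] cr cp ws u_def[symmetric] p_def[symmetric]
    by (simp add: delta_scale fun_eq_iff)
qed

lemma tens_form: assumes S: "S \<subseteq> {..<l}" and w: "w \<in> weyl l C" and eta: "\<eta> \<in> dset S"
  shows "\<exists>x e. tens l C S w \<eta> = delta x e \<and> x \<in> basis l C (card S) \<and> pm1 e"
proof -
  have u: "min_rep l C S (coset_rep l C S w)" and p: "coset_part l C S w \<in> weyl_sub l C S"
    using coset_decomp[OF S w] by auto
  let ?x = "(S, coset_rep l C S w, snd (wsact l C S (coset_part l C S w) \<eta>))"
  have "?x \<in> basis l C (card S)" using wsact_dset[OF S p eta] u S unfolding basis_def by simp
  then show ?thesis
    using tens_delta[of S w \<eta>] wsact_dset[OF S p eta] by blast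
qed

lemma fsupp_tens: "S \<subseteq> {..<l} \<Longrightarrow> w \<in> weyl l C \<Longrightarrow> \<eta> \<in> dset S \<Longrightarrow> fsupp (tens l C S w \<eta>)"
proof -
  assume a: "S \<subseteq> {..<l}" "w \<in> weyl l C" "\<eta> \<in> dset S"
  obtain x e where "tens l C S w \<eta> = delta x e" using tens_form[OF a] by blast
  then show ?thesis by simp
qed

lemma wmult_tens: assumes S: "S \<subseteq> {..<l}" and g: "g \<in> weyl l C" and w: "w \<in> weyl l C" and eta: "\<eta> \<in> dset S"
  shows "wmult l C g (tens l C S w \<eta>) = tens l C S (g * w) \<eta>"
proof -
  define u where "u = coset_rep l C S w"
  define p where "p = coset_part l C S w"
  have u: "min_rep l C S u" and p: "p \<in> weyl_sub l C S" and wup: "w = u * p"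
    using coset_decomp[OF S w] unfolding u_def p_def by auto
  have uW: "u \<in> weyl l C" using u unfolding min_rep_def by blast
  have guW: "g * u \<in> weyl l C" using g uW WS_mult by blast
  have "g * w = (g * u) * p" unfolding wup using g uW p WS_carrier by (metis assoc_mult_mat)
  then have "tens l C S (g * w) \<eta> = (\<lambda>y. fst (wsact l C S p \<eta>) * tens l C S (g * u) (snd (wsact l C S p \<eta>)) y)"
    using tens_mult[OF S guW p eta] by simp
  moreover have "wmult l C g (tens l C S w \<eta>) = (\<lambda>y. fst (wsact l C S p \<eta>) * tens l C S (g * u) (snd (wsact l C S p \<eta>)) y)"
    unfolding wmult_def tens_delta[of S w] linext_delta u_def[symmetric] p_def[symmetric] by simp
  ultimately show ?thesis by simp
qed

lemma CF_ext: assumes S: "S \<subseteq> {..<l}" and a: "a < l" "a \<notin> S" and M: "M \<in> weyl_sub l C S"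
  and eta: "\<eta> \<in> dset S" and eps: "pm1 \<epsilon>"
  shows "CFs (insert a S) (\<eta>(a := \<epsilon>)) M = CFs S \<eta> M * (\<Prod>k\<in>S. par (\<eta> k) (M $$ (k, a)))"
    "CFf (insert a S) (\<eta>(a := \<epsilon>)) M = (CFf S \<eta> M)(a := \<epsilon> * (\<Prod>k\<in>S. par (\<eta> k) (M $$ (k, a))))"
proof -
  have fS: "finite S" using S finite_subset by blast
  have Mout: "M $$ (a, m) = (if a = m then 1 else 0)" if "m < l" for m
    using WS_cols_outside[OF M a(1) that a(2) S] .
  have pmk: "pm1 (\<eta> k)" if "k \<in> S" for k using dset_pm1[OF eta that] .
  have set: "{..<l} - insert a S = ({..<l} - S) - {a}" by auto
  have aT: "a \<in> {..<l} - S" using a by auto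
  have "(\<Sum>m\<in>{..<l} - insert a S. M $$ (a, m)) = 0"
    using Mout by (intro sum.neutral) auto
  then have fa: "par \<epsilon> (\<Sum>m\<in>{..<l} - insert a S. M $$ (a, m)) = 1" by simp
  have "CFs (insert a S) (\<eta>(a := \<epsilon>)) M
      = (\<Prod>k\<in>S. par (\<eta> k) (\<Sum>m\<in>{..<l} - insert a S. M $$ (k, m)))"
    unfolding CFs_def using fS a fa by (simp add: prod.insert_remove) (intro prod.cong, auto)
  also have "\<dots> = (\<Prod>k\<in>S. par (\<eta> k) ((\<Sum>m\<in>{..<l} - S. M $$ (k, m)) - M $$ (k, a)))"
    unfolding set using aT by (intro prod.cong refl) (simp add: sum_diff1)
  also have "\<dots> = (\<Prod>k\<in>S. par (\<eta> k) (\<Sum>m\<in>{..<l} - S. M $$ (k, m)) * par (\<eta> k) (M $$ (k, a)))"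
    by (intro prod.cong refl) (simp add: par_diff pmk)
  also have "\<dots> = CFs S \<eta> M * (\<Prod>k\<in>S. par (\<eta> k) (M $$ (k, a)))"
    unfolding CFs_def prod.distrib ..
  finally show "CFs (insert a S) (\<eta>(a := \<epsilon>)) M = CFs S \<eta> M * (\<Prod>k\<in>S. par (\<eta> k) (M $$ (k, a)))" .
  show "CFf (insert a S) (\<eta>(a := \<epsilon>)) M = (CFf S \<eta> M)(a := \<epsilon> * (\<Prod>k\<in>S. par (\<eta> k) (M $$ (k, a))))"
  proof
    fix j
    show "CFf (insert a S) (\<eta>(a := \<epsilon>)) M j = ((CFf S \<eta> M)(a := \<epsilon> * (\<Prod>k\<in>S. par (\<eta> k) (M $$ (k, a))))) j"
    proof (cases "j \<in> insert a S")
      case False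
      then show ?thesis unfolding CFf_def by auto
    next
      case True
      have jl: "j < l" using True S a by auto
      have pi: "(\<Prod>k\<in>insert a S. f k) = f a * (\<Prod>k\<in>S. f k)" for f :: "nat \<Rightarrow> int"
        using fS a(2) by simp
      have pc: "(\<Prod>k\<in>S. par ((\<eta>(a := \<epsilon>)) k) (M $$ (k, j))) = (\<Prod>k\<in>S. par (\<eta> k) (M $$ (k, j)))"
        using a(2) by (intro prod.cong) auto
      have "CFf (insert a S) (\<eta>(a := \<epsilon>)) M j = (\<Prod>k\<in>insert a S. par ((\<eta>(a := \<epsilon>)) k) (M $$ (k, j)))"
        unfolding CFf_def using True by simp
      also have "\<dots> = par \<epsilon> (M $$ (a, j)) * (\<Prod>k\<in>S. par (\<eta> k) (M $$ (k, j)))"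
        unfolding pi pc by simp
      also have "\<dots> = ((CFf S \<eta> M)(a := \<epsilon> * (\<Prod>k\<in>S. par (\<eta> k) (M $$ (k, a))))) j"
        using True Mout[OF jl] a unfolding CFf_def by auto
      finally show ?thesis .
    qed
  qed
qed

lemma wsact_closed: assumes S: "S \<subseteq> {..<l}" and ws: "set ws \<subseteq> S" and eta: "\<eta> \<in> dset S"
  shows "wsact l C S (word_prod l C ws) \<eta> = (CFs S \<eta> (word_prod l C (rev ws)), CFf S \<eta> (word_prod l C (rev ws)))"
  using wsact_word[OF S ws eta] word_act_closed[OF S ws eta] by simp

definition eps :: "nat \<Rightarrow> int" where "eps c = (if c = 1 then -1 else 1)"

lemma pm1_eps: "pm1 (eps c)" unfolding eps_def pm1_def by simp

lemma csum_swap: assumes "pm1 \<tau>"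
  shows "(\<Sum>c\<in>{1::nat, 2}. (-1::int) ^ (n + c + 1) * (e * \<tau> * T (eps c * \<tau>)))
       = e * (\<Sum>c\<in>{1::nat, 2}. (-1) ^ (n + c + 1) * T (eps c))"
  using assms unfolding pm1_def eps_def by (auto simp: algebra_simps)

lemma bd_cell_expand: "bd_cell l C (S, w, \<eta>) = (\<lambda>y. \<Sum>j<length (sorted_list_of_set ({..<l} - S)). \<Sum>c\<in>{1::nat, 2}.
          (-1) ^ ((j + 1) + c + 1) * tens l C (insert (sorted_list_of_set ({..<l} - S) ! j) S) w
            (\<eta>(sorted_list_of_set ({..<l} - S) ! j := eps c)) y)"
  unfolding bd_cell_def eps_def Let_def by simp

lemma bdT: assumes S: "S \<subseteq> {..<l}" and w: "w \<in> weyl l C" and eta: "\<eta> \<in> dset S"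
  shows "bd l C (tens l C S w \<eta>) = bd_cell l C (S, w, \<eta>)"
proof -
  define u where "u = coset_rep l C S w"
  define p where "p = coset_part l C S w"
  have u: "min_rep l C S u" and p: "p \<in> weyl_sub l C S" and wup: "w = u * p"
    using coset_decomp[OF S w] unfolding u_def p_def by auto
  let ?u = u and ?p = p
  have uW: "?u \<in> weyl l C" using u unfolding min_rep_def by blast
  define e where "e = fst (wsact l C S ?p \<eta>)"
  define \<eta>1 where "\<eta>1 = snd (wsact l C S ?p \<eta>)"
  have lhs: "bd l C (tens l C S w \<eta>) = (\<lambda>y. e * bd_cell l C (S, ?u, \<eta>1) y)"
    unfolding bd_def tens_delta[of S w] linext_delta e_def \<eta>1_def u_def p_def ..
  let ?cs = "sorted_list_of_set ({..<l} - S)"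
  have key: "e * (\<Sum>c\<in>{1::nat, 2}. (-1) ^ ((j + 1) + c + 1) * tens l C (insert (?cs ! j) S) ?u (\<eta>1(?cs ! j := eps c)) y)
      = (\<Sum>c\<in>{1::nat, 2}. (-1) ^ ((j + 1) + c + 1) * tens l C (insert (?cs ! j) S) w (\<eta>(?cs ! j := eps c)) y)"
    if j: "j < length ?cs" for j y
  proof -
    define a where "a = ?cs ! j"
    have "a \<in> set ?cs" unfolding a_def using j by (rule nth_mem)
    then have aT: "a \<in> {..<l} - S" by simp
    then have al: "a < l" and aS: "a \<notin> S" by auto
    let ?S' = "insert a S"
    have S': "?S' \<subseteq> {..<l}" using S al by auto
    have pS': "?p \<in> weyl_sub l C ?S'" using p WS_mono[of S ?S'] by blast
    have t: "tens l C ?S' w (\<eta>(a := eps c)) y = e * (\<Prod>k\<in>S. par (\<eta> k) (M $$ (k, a))) *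
          tens l C ?S' ?u (\<eta>1(a := eps c * (\<Prod>k\<in>S. par (\<eta> k) (M $$ (k, a))))) y"
      if M: "M \<in> weyl_sub l C S" "wsact l C S ?p \<eta> = (CFs S \<eta> M, CFf S \<eta> M)"
        "wsact l C ?S' ?p (\<eta>(a := eps c)) = (CFs ?S' (\<eta>(a := eps c)) M, CFf ?S' (\<eta>(a := eps c)) M)" for M c
    proof -
      have d: "\<eta>(a := eps c) \<in> dset ?S'" using dset_upd[OF eta aS pm1_eps] .
      have "tens l C ?S' w (\<eta>(a := eps c)) y = tens l C ?S' (?u * ?p) (\<eta>(a := eps c)) y" using wup by simp
      also have "\<dots> = fst (wsact l C ?S' ?p (\<eta>(a := eps c))) * tens l C ?S' ?u (snd (wsact l C ?S' ?p (\<eta>(a := eps c)))) y"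
        using tens_mult[OF S' uW pS' d] by simp
      also have "\<dots> = e * (\<Prod>k\<in>S. par (\<eta> k) (M $$ (k, a))) *
          tens l C ?S' ?u (\<eta>1(a := eps c * (\<Prod>k\<in>S. par (\<eta> k) (M $$ (k, a))))) y"
        using M CF_ext[OF S al aS M(1) eta pm1_eps[of c]] unfolding e_def \<eta>1_def by simp
      finally show ?thesis .
    qed
    obtain ws where ws: "set ws \<subseteq> S" "word_prod l C ws = ?p" using p weyl_subE by blast
    define M where "M = word_prod l C (rev ws)"
    have M: "M \<in> weyl_sub l C S" "wsact l C S ?p \<eta> = (CFs S \<eta> M, CFf S \<eta> M)"
    proof -
      have "set (rev ws) \<subseteq> S" using ws by simp
      then show "M \<in> weyl_sub l C S" unfolding M_def by (rule weyl_subI)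
      show "wsact l C S ?p \<eta> = (CFs S \<eta> M, CFf S \<eta> M)"
        unfolding M_def using ws wsact_closed[OF S ws(1) eta] by simp
    qed
    have M2: "wsact l C ?S' ?p (\<eta>(a := eps c)) = (CFs ?S' (\<eta>(a := eps c)) M, CFf ?S' (\<eta>(a := eps c)) M)" for c
      unfolding M_def using ws wsact_closed[OF S' _ dset_upd[OF eta aS pm1_eps], of ws] by auto
    define \<tau> where "\<tau> = (\<Prod>k\<in>S. par (\<eta> k) (M $$ (k, a)))"
    have tp: "pm1 \<tau>" unfolding \<tau>_def by (intro pm1_prod par_pm1 dset_pm1[OF eta]) auto
    have "(\<Sum>c\<in>{1::nat, 2}. (-1) ^ ((j + 1) + c + 1) * tens l C ?S' w (\<eta>(a := eps c)) y)
        = (\<Sum>c\<in>{1::nat, 2}. (-1) ^ ((j + 1) + c + 1) * (e * \<tau> * tens l C ?S' ?u (\<eta>1(a := eps c * \<tau>)) y))"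
      using t[OF M M2] unfolding \<tau>_def by simp
    also have "\<dots> = e * (\<Sum>c\<in>{1::nat, 2}. (-1) ^ ((j + 1) + c + 1) * tens l C ?S' ?u (\<eta>1(a := eps c)) y)"
      by (rule csum_swap[OF tp, where T="\<lambda>t. tens l C ?S' ?u (\<eta>1(a := t)) y"])
    finally show ?thesis unfolding a_def by simp
  qed
  show ?thesis
    unfolding lhs bd_cell_expand
  proof (rule ext)
    fix y
    have "e * (\<Sum>j<length ?cs. \<Sum>c\<in>{1::nat, 2}. (-1) ^ ((j + 1) + c + 1) * tens l C (insert (?cs ! j) S) ?u (\<eta>1(?cs ! j := eps c)) y)
        = (\<Sum>j<length ?cs. e * (\<Sum>c\<in>{1::nat, 2}. (-1) ^ ((j + 1) + c + 1) * tens l C (insert (?cs ! j) S) ?u (\<eta>1(?cs ! j := eps c)) y))"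
      by (rule sum_distrib_left)
    also have "\<dots> = (\<Sum>j<length ?cs. \<Sum>c\<in>{1::nat, 2}. (-1) ^ ((j + 1) + c + 1) * tens l C (insert (?cs ! j) S) w (\<eta>(?cs ! j := eps c)) y)"
      by (rule sum.cong[OF refl], rule key) simp
    finally show "e * (\<Sum>j<length ?cs. \<Sum>c\<in>{1::nat, 2}. (-1) ^ ((j + 1) + c + 1) * tens l C (insert (?cs ! j) S) ?u (\<eta>1(?cs ! j := eps c)) y)
        = (\<Sum>j<length ?cs. \<Sum>c\<in>{1::nat, 2}. (-1) ^ ((j + 1) + c + 1) * tens l C (insert (?cs ! j) S) w (\<eta>(?cs ! j := eps c)) y)" .
  qed
qed

end


lemma linext_sum_scale: assumes "finite A" "\<And>x. x \<in> A \<Longrightarrow> fsupp (F x)"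
  shows "linext G (\<lambda>y. \<Sum>x\<in>A. c x * F x y) = (\<lambda>z. \<Sum>x\<in>A. c x * linext G (F x) z)"
proof -
  have "linext G (\<lambda>y. \<Sum>x\<in>A. c x * F x y) = (\<lambda>z. \<Sum>x\<in>A. linext G (\<lambda>y. c x * F x y) z)"
    using assms by (intro linext_sum) (auto intro: fsupp_scale)
  also have "\<dots> = (\<lambda>z. \<Sum>x\<in>A. c x * linext G (F x) z)"
    using assms by (simp add: linext_scale)
  finally show ?thesis .
qed

lemma sgn_rearr: "(-1::int) ^ (p + 1 + c + 1) * ((-1) ^ (q + 1 + c' + 1) * x) = (-1) ^ (p + q) * ((-1) ^ (c + c') * x)"
proof -
  have "(-1::int) ^ (p + 1 + c + 1) = (-1) ^ p * (-1) ^ c" by (simp add: power_add)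
  moreover have "(-1::int) ^ (q + 1 + c' + 1) = (-1) ^ q * (-1) ^ c'" by (simp add: power_add)
  ultimately show ?thesis by (simp add: power_add)
qed

context cartan begin

lemma bd_cell_sum: assumes S: "S \<subseteq> {..<l}"
  shows "bd_cell l C (S, w, \<eta>) = (\<lambda>y. \<Sum>a\<in>{..<l} - S. \<Sum>c\<in>{1::nat, 2}.
      (-1) ^ (pos ({..<l} - S) a + 1 + c + 1) * tens l C (insert a S) w (\<eta>(a := eps c)) y)"
proof
  fix y
  show "bd_cell l C (S, w, \<eta>) y = (\<Sum>a\<in>{..<l} - S. \<Sum>c\<in>{1::nat, 2}.
      (-1) ^ (pos ({..<l} - S) a + 1 + c + 1) * tens l C (insert a S) w (\<eta>(a := eps c)) y)"
    unfolding bd_cell_expand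
    using sum_sorted_reindex[of "{..<l} - S" "\<lambda>a j. \<Sum>c\<in>{1::nat, 2}. (-1) ^ ((j + 1) + c + 1) * tens l C (insert a S) w (\<eta>(a := eps c)) y"]
    by simp
qed

lemma fsupp_bd_cell: assumes S: "S \<subseteq> {..<l}" and w: "w \<in> weyl l C" and eta: "\<eta> \<in> dset S"
  shows "fsupp (bd_cell l C (S, w, \<eta>))"
  unfolding bd_cell_sum[OF S]
proof (intro fsupp_sum fsupp_scale)
  fix a c assume a: "a \<in> {..<l} - S"
  show "fsupp (tens l C (insert a S) w (\<eta>(a := eps c)))"
    using a S by (intro fsupp_tens w dset_upd[OF eta] pm1_eps) auto
qed auto

lemma bd_bd_cell: assumes S: "S \<subseteq> {..<l}" and w: "w \<in> weyl l C" and eta: "\<eta> \<in> dset S"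
  shows "bd l C (bd_cell l C (S, w, \<eta>)) = (\<lambda>_. 0)"
proof
  fix z
  define T where "T = {..<l} - S"
  have fT: "finite T" unfolding T_def by simp
  define G where "G a b c c' = tens l C (insert b (insert a S)) w ((\<eta>(a := eps c))(b := eps c')) z" for a b c c'
  define K where "K a b = (\<Sum>c\<in>{1::nat, 2}. \<Sum>c'\<in>{1::nat, 2}. (-1::int) ^ (c + c') * G a b c c')" for a b
  define H where "H a b = (-1::int) ^ (pos T a + pos (T - {a}) b) * K a b" for a b
  have dS: "\<eta>(a := eps c) \<in> dset (insert a S)" if "a \<in> T" for a c
    using that dset_upd[OF eta _ pm1_eps] unfolding T_def by auto
  have Sa: "insert a S \<subseteq> {..<l}" if "a \<in> T" for a using that S unfolding T_def by auto
  have Ta: "{..<l} - insert a S = T - {a}" for a unfolding T_def by auto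
  have fs: "fsupp (\<lambda>y. (-1) ^ (pos T a + 1 + c + 1) * tens l C (insert a S) w (\<eta>(a := eps c)) y)"
    if "a \<in> T" for a c using fsupp_tens[OF Sa[OF that] w dS[OF that]] by (rule fsupp_scale)
  have fs2: "fsupp (\<lambda>y. \<Sum>c\<in>{1::nat, 2}. (-1) ^ (pos T a + 1 + c + 1) * tens l C (insert a S) w (\<eta>(a := eps c)) y)"
    if "a \<in> T" for a by (intro fsupp_sum) (use fs[OF that] in auto)
  have "bd l C (bd_cell l C (S, w, \<eta>)) z
      = (\<Sum>a\<in>T. \<Sum>c\<in>{1::nat, 2}. (-1) ^ (pos T a + 1 + c + 1) * bd l C (tens l C (insert a S) w (\<eta>(a := eps c))) z)"
  proof -
    have "bd l C (bd_cell l C (S, w, \<eta>)) = linext (bd_cell l C) (\<lambda>y. \<Sum>a\<in>T. \<Sum>c\<in>{1::nat, 2}.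
      (-1) ^ (pos T a + 1 + c + 1) * tens l C (insert a S) w (\<eta>(a := eps c)) y)"
      unfolding bd_def bd_cell_sum[OF S] T_def ..
    also have "\<dots> = (\<lambda>z. \<Sum>a\<in>T. linext (bd_cell l C) (\<lambda>y. \<Sum>c\<in>{1::nat, 2}.
      (-1) ^ (pos T a + 1 + c + 1) * tens l C (insert a S) w (\<eta>(a := eps c)) y) z)"
      by (rule linext_sum[OF fT fs2])
    also have "\<dots> = (\<lambda>z. \<Sum>a\<in>T. \<Sum>c\<in>{1::nat, 2}. (-1) ^ (pos T a + 1 + c + 1) * bd l C (tens l C (insert a S) w (\<eta>(a := eps c))) z)"
    proof (rule ext, rule sum.cong[OF refl])
      fix z a assume a: "a \<in> T"
      show "linext (bd_cell l C) (\<lambda>y. \<Sum>c\<in>{1::nat, 2}. (-1) ^ (pos T a + 1 + c + 1) * tens l C (insert a S) w (\<eta>(a := eps c)) y) z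
        = (\<Sum>c\<in>{1::nat, 2}. (-1) ^ (pos T a + 1 + c + 1) * bd l C (tens l C (insert a S) w (\<eta>(a := eps c))) z)"
        unfolding bd_def
        using linext_sum_scale[of "{1::nat, 2}" "\<lambda>c. tens l C (insert a S) w (\<eta>(a := eps c))" "bd_cell l C"
            "\<lambda>c. (-1) ^ (pos T a + 1 + c + 1)"] fsupp_tens[OF Sa[OF a] w dS[OF a]] by simp
    qed
    finally show ?thesis by simp
  qed
  also have "\<dots> = (\<Sum>a\<in>T. \<Sum>b\<in>T - {a}. H a b)"
  proof (rule sum.cong[OF refl])
    fix a assume a: "a \<in> T"
    have "(\<Sum>c\<in>{1::nat, 2}. (-1) ^ (pos T a + 1 + c + 1) * bd l C (tens l C (insert a S) w (\<eta>(a := eps c))) z)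
      = (\<Sum>c\<in>{1::nat, 2}. (-1) ^ (pos T a + 1 + c + 1) * (\<Sum>b\<in>T - {a}. \<Sum>c'\<in>{1::nat, 2}.
          (-1) ^ (pos (T - {a}) b + 1 + c' + 1) * G a b c c'))"
      unfolding bdT[OF Sa[OF a] w dS[OF a]] bd_cell_sum[OF Sa[OF a]] Ta G_def ..
    also have "\<dots> = (\<Sum>c\<in>{1::nat, 2}. \<Sum>b\<in>T - {a}. \<Sum>c'\<in>{1::nat, 2}.
          (-1) ^ (pos T a + pos (T - {a}) b) * ((-1) ^ (c + c') * G a b c c'))"
      by (simp only: sum_distrib_left sgn_rearr)
    also have "\<dots> = (\<Sum>b\<in>T - {a}. \<Sum>c\<in>{1::nat, 2}. \<Sum>c'\<in>{1::nat, 2}.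
          (-1) ^ (pos T a + pos (T - {a}) b) * ((-1) ^ (c + c') * G a b c c'))"
      by (rule sum.swap)
    also have "\<dots> = (\<Sum>b\<in>T - {a}. H a b)"
      unfolding H_def K_def by (simp only: sum_distrib_left)
    finally show "(\<Sum>c\<in>{1::nat, 2}. (-1) ^ (pos T a + 1 + c + 1) * bd l C (tens l C (insert a S) w (\<eta>(a := eps c))) z)
        = (\<Sum>b\<in>T - {a}. H a b)" .
  qed
  also have "\<dots> = 0"
  proof (rule antisym_sum[OF fT])
    fix a b assume ab: "a \<in> T" "b \<in> T" "a \<noteq> b"
    have Gs: "G b a c c' = G a b c' c" for c c'
      unfolding G_def using ab(3) by (simp add: insert_commute fun_upd_twist)
    have Ks: "K b a = K a b"
      unfolding K_def Gs by (subst sum.swap) (simp add: add.commute)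
    show "H b a = - H a b"
      unfolding H_def Ks using sign_swap[OF fT ab] by simp
  qed
  finally show "bd l C (bd_cell l C (S, w, \<eta>)) z = 0" .
qed

lemma wmult_bd_cell: assumes S: "S \<subseteq> {..<l}" and g: "g \<in> weyl l C" and w: "w \<in> weyl l C" and eta: "\<eta> \<in> dset S"
  shows "wmult l C g (bd_cell l C (S, w, \<eta>)) = bd_cell l C (S, g * w, \<eta>)"
proof -
  define T where "T = {..<l} - S"
  have fT: "finite T" unfolding T_def by simp
  have dS: "\<eta>(a := eps c) \<in> dset (insert a S)" if "a \<in> T" for a c
    using that dset_upd[OF eta _ pm1_eps] unfolding T_def by auto
  have Sa: "insert a S \<subseteq> {..<l}" if "a \<in> T" for a using that S unfolding T_def by auto
  have fs2: "fsupp (\<lambda>y. \<Sum>c\<in>{1::nat, 2}. (-1) ^ (pos T a + 1 + c + 1) * tens l C (insert a S) w (\<eta>(a := eps c)) y)"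
    if "a \<in> T" for a
    by (intro fsupp_sum fsupp_scale fsupp_tens[OF Sa[OF that] w dS[OF that]]) auto
  have "wmult l C g (bd_cell l C (S, w, \<eta>)) = (\<lambda>z. \<Sum>a\<in>T. linext (\<lambda>(S, u, \<eta>). tens l C S (g * u) \<eta>) (\<lambda>y. \<Sum>c\<in>{1::nat, 2}.
      (-1) ^ (pos T a + 1 + c + 1) * tens l C (insert a S) w (\<eta>(a := eps c)) y) z)"
    unfolding wmult_def bd_cell_sum[OF S] T_def[symmetric] by (rule linext_sum[OF fT fs2])
  also have "\<dots> = (\<lambda>z. \<Sum>a\<in>T. \<Sum>c\<in>{1::nat, 2}. (-1) ^ (pos T a + 1 + c + 1) * tens l C (insert a S) (g * w) (\<eta>(a := eps c)) z)"
  proof (rule ext, rule sum.cong[OF refl])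
    fix z a assume a: "a \<in> T"
    show "linext (\<lambda>(S, u, \<eta>). tens l C S (g * u) \<eta>) (\<lambda>y. \<Sum>c\<in>{1::nat, 2}.
      (-1) ^ (pos T a + 1 + c + 1) * tens l C (insert a S) w (\<eta>(a := eps c)) y) z
      = (\<Sum>c\<in>{1::nat, 2}. (-1) ^ (pos T a + 1 + c + 1) * tens l C (insert a S) (g * w) (\<eta>(a := eps c)) z)"
      using linext_sum_scale[of "{1::nat, 2}" "\<lambda>c. tens l C (insert a S) w (\<eta>(a := eps c))" "\<lambda>(S, u, \<eta>). tens l C S (g * u) \<eta>"
            "\<lambda>c. (-1) ^ (pos T a + 1 + c + 1)"] fsupp_tens[OF Sa[OF a] w dS[OF a]]
        wmult_tens[OF Sa[OF a] g w dS[OF a]] unfolding wmult_def by simp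
  qed
  also have "\<dots> = bd_cell l C (S, g * w, \<eta>)"
    unfolding bd_cell_sum[OF S] T_def ..
  finally show ?thesis .
qed

end


context cartan begin

lemma basis_finite: "finite (basis l C k)"
proof -
  have "basis l C k \<subseteq> Pow {..<l} \<times> (weyl l C \<times> (\<Union>S\<in>Pow {..<l}. dset S))"
    unfolding basis_def min_rep_def by auto
  moreover have "finite (\<Union>S\<in>Pow {..<l}. dset S)"
  proof (rule finite_UN_I)
    show "finite (Pow {..<l::nat})" by simp
  next
    fix S assume "S \<in> Pow {..<l::nat}"
    then have "finite S" using finite_subset by blast
    then show "finite (dset S)" unfolding dset_def by (intro finite_PiE) auto
  qed
  ultimately show ?thesis using weyl_finite by (meson finite_SigmaI finite_Pow_iff finite_lessThan finite_subset)
qed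

lemma basisD: assumes "(S, u, \<eta>) \<in> basis l C k"
  shows "S \<subseteq> {..<l}" "u \<in> weyl l C" "\<eta> \<in> dset S" "card S = k"
  using assms unfolding basis_def min_rep_def by auto

lemma Mod_fsupp: assumes "f \<in> Mod l C k" shows "fsupp f" "{x. f x \<noteq> 0} \<subseteq> basis l C k"
proof -
  show sub: "{x. f x \<noteq> 0} \<subseteq> basis l C k" using assms unfolding Mod_def by auto
  show "fsupp f" unfolding fsupp_def using finite_subset[OF sub basis_finite] .
qed

lemma bd_cell_basis: assumes x: "x \<in> basis l C k" and y: "y \<notin> basis l C (Suc k)"
  shows "bd_cell l C x y = 0"
proof -
  obtain S u \<eta> where xs: "x = (S, u, \<eta>)" by (cases x)
  have S: "S \<subseteq> {..<l}" and u: "u \<in> weyl l C" and eta: "\<eta> \<in> dset S" and cS: "card S = k"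
    using basisD x xs by auto
  have fS: "finite S" using S finite_subset by blast
  have "tens l C (insert a S) u (\<eta>(a := eps c)) y = 0" if a: "a \<in> {..<l} - S" for a c
  proof -
    have Sa: "insert a S \<subseteq> {..<l}" using a S by auto
    obtain x' e where te: "tens l C (insert a S) u (\<eta>(a := eps c)) = delta x' e" and
      xb: "x' \<in> basis l C (card (insert a S))"
      using tens_form[OF Sa u dset_upd[OF eta _ pm1_eps]] a by blast
    have "card (insert a S) = Suc k" using a fS cS by simp
    then have "y \<noteq> x'" using xb y by auto
    then show ?thesis unfolding te delta_def by simp
  qed
  then show ?thesis unfolding xs bd_cell_sum[OF S] by simp
qed

theorem main_thm:
  shows "\<forall>k. (\<forall>f \<in> Mod l C k. bd l C f \<in> Mod l C (Suc k))
           \<and> (\<forall>f \<in> Mod l C k. \<forall>f' \<in> Mod l C k. \<forall>a b :: int.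
                 bd l C (\<lambda>x. a * f x + b * f' x) = (\<lambda>y. a * bd l C f y + b * bd l C f' y))
           \<and> (\<forall>g \<in> weyl l C. \<forall>f \<in> Mod l C k. bd l C (wmult l C g f) = wmult l C g (bd l C f))
           \<and> (\<forall>f \<in> Mod l C k. bd l C (bd l C f) = (\<lambda>_. 0))"
proof (intro allI conjI ballI)
  fix k
  {
    fix f assume f: "f \<in> Mod l C k"
    have fs: "fsupp f" and sub: "{x. f x \<noteq> 0} \<subseteq> basis l C k" using Mod_fsupp[OF f] by auto
    have fin: "finite {x. f x \<noteq> 0}" using fs unfolding fsupp_def .
    have bdf: "bd l C f = (\<lambda>y. \<Sum>x\<in>{x. f x \<noteq> 0}. f x * bd_cell l C x y)"
      unfolding bd_def linext_def ..
    have xinfo: "\<And>x. x \<in> {x. f x \<noteq> 0} \<Longrightarrow> \<exists>S u \<eta>. x = (S, u, \<eta>) \<and> S \<subseteq> {..<l} \<and> u \<in> weyl l C \<and> \<eta> \<in> dset S"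
      using sub basisD by (metis (no_types, lifting) prod_cases3 subsetD)
    have fsbd: "fsupp (bd_cell l C x)" if "x \<in> {x. f x \<noteq> 0}" for x
      using xinfo[OF that] fsupp_bd_cell by auto
    have bdl: "linext (bd_cell l C) f = (\<lambda>y. \<Sum>x\<in>{x. f x \<noteq> 0}. f x * bd_cell l C x y)"
      unfolding linext_def ..
    note f fs sub fin bdf xinfo fsbd bdl
  } note F = this
  {
    fix f assume f: "f \<in> Mod l C k"
    note F = F[OF f]
    show "bd l C f \<in> Mod l C (Suc k)"
      unfolding Mod_def
    proof (intro CollectI allI impI)
      fix y assume y: "y \<notin> basis l C (Suc k)"
      have "bd_cell l C x y = 0" if "x \<in> {x. f x \<noteq> 0}" for x
        using bd_cell_basis[OF _ y] that F(3) by blast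
      then show "bd l C f y = 0" unfolding F(5) by simp
    qed
    show "bd l C (bd l C f) = (\<lambda>_. 0)"
    proof -
      have "bd l C (bd l C f) = (\<lambda>z. \<Sum>x\<in>{x. f x \<noteq> 0}. f x * bd l C (bd_cell l C x) z)"
        unfolding bd_def F(8) by (rule linext_sum_scale[OF F(4) F(7)])
      also have "\<dots> = (\<lambda>z. 0)"
      proof (rule ext, rule sum.neutral, rule ballI)
        fix z x assume x: "x \<in> {x. f x \<noteq> 0}"
        obtain S u \<eta> where "x = (S, u, \<eta>)" "S \<subseteq> {..<l}" "u \<in> weyl l C" "\<eta> \<in> dset S" using F(6)[OF x] by blast
        then show "f x * bd l C (bd_cell l C x) z = 0" using bd_bd_cell by simp
      qed
      finally show ?thesis .
    qed
  }
  {
    fix f f' :: "nat set \<times> int mat \<times> (nat \<Rightarrow> int) \<Rightarrow> int" and a b :: int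
    assume f: "f \<in> Mod l C k" and f': "f' \<in> Mod l C k"
    show "bd l C (\<lambda>x. a * f x + b * f' x) = (\<lambda>y. a * bd l C f y + b * bd l C f' y)"
      unfolding bd_def by (rule linext_lin[OF F(2)[OF f] F(2)[OF f']])
  }
  {
    fix g f assume g: "g \<in> weyl l C" and f: "f \<in> Mod l C k"
    note F = F[OF f]
    let ?F = "\<lambda>(S, u, \<eta>). tens l C S (g * u) \<eta>"
    have wm: "wmult l C g f = (\<lambda>y. \<Sum>x\<in>{x. f x \<noteq> 0}. f x * ?F x y)"
      unfolding wmult_def linext_def ..
    have fsF: "fsupp (?F x)" if xin: "x \<in> {x. f x \<noteq> 0}" for x
    proof -
      obtain S u \<eta> where "x = (S, u, \<eta>)" "S \<subseteq> {..<l}" "u \<in> weyl l C" "\<eta> \<in> dset S" using F(6)[OF xin] by blast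
      then show ?thesis using fsupp_tens g WS_mult by auto
    qed
    have "bd l C (wmult l C g f) = (\<lambda>z. \<Sum>x\<in>{x. f x \<noteq> 0}. f x * bd l C (?F x) z)"
      unfolding wm bd_def by (rule linext_sum_scale[OF F(4) fsF])
    also have "\<dots> = (\<lambda>z. \<Sum>x\<in>{x. f x \<noteq> 0}. f x * wmult l C g (bd_cell l C x) z)"
    proof (rule ext, rule sum.cong[OF refl])
      fix z x assume x: "x \<in> {x. f x \<noteq> 0}"
      obtain S u \<eta> where xs: "x = (S, u, \<eta>)" "S \<subseteq> {..<l}" "u \<in> weyl l C" "\<eta> \<in> dset S" using F(6)[OF x] by blast
      have gu: "g * u \<in> weyl l C" using g xs WS_mult by blast
      show "f x * bd l C (?F x) z = f x * wmult l C g (bd_cell l C x) z"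
        using bdT[OF xs(2) gu xs(4)] wmult_bd_cell[OF xs(2) g xs(3,4)] xs(1) by simp
    qed
    also have "\<dots> = wmult l C g (bd l C f)"
      unfolding bd_def F(8) wmult_def by (rule linext_sum_scale[OF F(4) F(7), symmetric])
    finally show "bd l C (wmult l C g f) = wmult l C g (bd l C f)" .
  }
qed

end

theorem proposition3p3p2:
  fixes l :: nat and C :: "nat \<Rightarrow> nat \<Rightarrow> int"
  assumes "cartan_finite_type l C"
  shows "\<forall>k. (\<forall>f \<in> Mod l C k. bd l C f \<in> Mod l C (Suc k))
           \<and> (\<forall>f \<in> Mod l C k. \<forall>f' \<in> Mod l C k. \<forall>a b :: int.
                 bd l C (\<lambda>x. a * f x + b * f' x) = (\<lambda>y. a * bd l C f y + b * bd l C f' y))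
           \<and> (\<forall>g \<in> weyl l C. \<forall>f \<in> Mod l C k. bd l C (wmult l C g f) = wmult l C g (bd l C f))
           \<and> (\<forall>f \<in> Mod l C k. bd l C (bd l C f) = (\<lambda>_. 0))"
proof -
  interpret cartan l C by unfold_locales (rule assms)
  show ?thesis by (rule main_thm)
qed


end
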